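(* Let $\mathbf{p}=(p,s)$ with $p\in(0,1]$, $s\in\mathbb{R}$, and let $c$ be a Whitney parameter. Then $f\in L^0(\mathbb{R}^{1+n}_+)$ belongs to $Z^{\mathbf{p}}$ if and only if there exist a sequence $(a_k)_{k\in\mathbb{N}}$ of $Z^{\mathbf{p}}_c$-atoms and $\lambda\in\ell^p(\mathbb{N})$ such that $f=\sum_{k}\lambda_ka_k$ with convergence in $Z^{\mathbf{p}}$. Moreover $\|f\|_{Z^{\mathbf{p}}}\simeq\inf\|\lambda\|_{\ell^p(\mathbb{N})}$, the infimum taken over all such decompositions.
   Context: Fix $n,N\ge1$; functions on $\mathbb{R}^{1+n}_+:=(0,\infty)\times\mathbb{R}^n$ are $\mathbb{C}^N$-valued. A Whitney parameter is $c=(c_0,c_1)\in(0,\infty)\times(3/2,\infty)$, with Whitney region $\Omega_c(t,x):=(c_1^{-1}t,c_1t)\times B(x,c_0t)$ and $\mathcal{W}_cf(t,x):=\big(|\Omega_c(t,x)|^{-1}\iint_{\Omega_c(t,x)}|f|^2\big)^{1/2}$. For $\mathbf{p}=(p,s)$, $\|f\|_{Z^{\mathbf{p}}}:=\|\mathcal{W}_{(1,2)}(\kappa^{-s}f)\|_{L^p(\mathbb{R}^{1+n}_+,dx\,dt/t)}$ where $\kappa^{-s}f(t,x)=t^{-s}f(t,x)$, and $Z^{\mathbf{p}}$ is the set of $f$ with finite quasinorm. A $Z^{\mathbf{p}}_c$-atom associated with $(t,x)\in\mathbb{R}^{1+n}_+$ is a function $a$ essentially supported in $\Omega_c(t,x)$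 with $\|\kappa^{-s}a\|_{L^2(\Omega_c(t,x),dx\,dt/t)}\le t^{n\delta_{p,2}}$, where $\delta_{p,2}:=\frac12-\frac1p$. *)

theory Defs
  imports "HOL-Analysis.Analysis"
begin

text \<open>Points of the upper half-space are pairs (t, x) with t :: real (t > 0) and
  x :: real^'n; functions take values in complex^'N.\<close>

definition epowr :: "ennreal \<Rightarrow> real \<Rightarrow> ennreal" where
  "epowr x r = (if x = \<infinity> then \<infinity> else ennreal (enn2real x powr r))"

definition whitney_param :: "real \<times> real \<Rightarrow> bool" where
  "whitney_param c \<longleftrightarrow> fst c > 0 \<and> snd c > 3/2"

definition whitney_region :: "real \<times> real \<Rightarrow> real \<times> (real^'n::finite) \<Rightarrow> (real \<times> (real^'n)) set" where
  "whitney_region c z =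
     {w. fst z / snd c < fst w \<and> fst w < snd c * fst z \<and> snd w \<in> ball (snd z) (fst c * fst z)}"

definition whitney_avg :: "real \<times> real \<Rightarrow> (real \<times> (real^'n::finite) \<Rightarrow> 'b::real_normed_vector)
    \<Rightarrow> real \<times> (real^'n) \<Rightarrow> ennreal" where
  "whitney_avg c f z =
     epowr ((\<integral>\<^sup>+ w \<in> whitney_region c z. ennreal ((norm (f w))\<^sup>2) \<partial>lborel)
             / emeasure lborel (whitney_region c z)) (1/2)"

definition kappa :: "real \<Rightarrow> (real \<times> 'a \<Rightarrow> 'b::real_vector) \<Rightarrow> real \<times> 'a \<Rightarrow> 'b" where
  "kappa s f = (\<lambda>w. fst w powr s *\<^sub>R f w)"

definition zp_norm :: "real \<Rightarrow> real \<Rightarrow> (real \<times> (real^'n::finite) \<Rightarrow> 'b::real_normed_vector) \<Rightarrow> ennreal" where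
  "zp_norm p s f =
     epowr (\<integral>\<^sup>+ z \<in> {z. fst z > 0}.
               epowr (whitney_avg (1, 2) (kappa (-s) f) z) p * ennreal (1 / fst z) \<partial>lborel) (1/p)"

definition in_Zp :: "real \<Rightarrow> real \<Rightarrow> (real \<times> (real^'n::finite) \<Rightarrow> 'b::real_normed_vector) \<Rightarrow> bool" where
  "in_Zp p s f \<longleftrightarrow> f \<in> borel_measurable lborel \<and> zp_norm p s f < \<infinity>"

definition Zp_atom_at :: "real \<Rightarrow> real \<Rightarrow> real \<times> real \<Rightarrow> real \<times> (real^'n::finite)
    \<Rightarrow> (real \<times> (real^'n) \<Rightarrow> 'b::real_normed_vector) \<Rightarrow> bool" where
  "Zp_atom_at p s c z a \<longleftrightarrow>
     fst z > 0 \<and> a \<in> borel_measurable lborel \<and>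
     (AE w in lborel. w \<notin> whitney_region c z \<longrightarrow> a w = 0) \<and>
     epowr (\<integral>\<^sup>+ w \<in> whitney_region c z.
              ennreal ((norm (kappa (-s) a w))\<^sup>2) * ennreal (1 / fst w) \<partial>lborel) (1/2)
       \<le> ennreal (fst z powr (real CARD('n) * (1/2 - 1/p)))"

definition Zp_atom :: "real \<Rightarrow> real \<Rightarrow> real \<times> real
    \<Rightarrow> (real \<times> (real^'n::finite) \<Rightarrow> 'b::real_normed_vector) \<Rightarrow> bool" where
  "Zp_atom p s c a \<longleftrightarrow> (\<exists>z. Zp_atom_at p s c z a)"

definition lp_sum :: "real \<Rightarrow> (nat \<Rightarrow> complex) \<Rightarrow> ennreal" where
  "lp_sum p lam = (\<Sum>k. ennreal (norm (lam k) powr p))"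

definition lp_norm :: "real \<Rightarrow> (nat \<Rightarrow> complex) \<Rightarrow> ennreal" where
  "lp_norm p lam = epowr (lp_sum p lam) (1/p)"

definition atomic_decomp :: "real \<Rightarrow> real \<Rightarrow> real \<times> real
    \<Rightarrow> (real \<times> (real^'n::finite) \<Rightarrow> complex^'N::finite)
    \<Rightarrow> (nat \<Rightarrow> complex) \<Rightarrow> (nat \<Rightarrow> real \<times> (real^'n) \<Rightarrow> complex^'N) \<Rightarrow> bool" where
  "atomic_decomp p s c f lam a \<longleftrightarrow>
     (\<forall>k. Zp_atom p s c (a k)) \<and> lp_sum p lam < \<infinity> \<and>
     ((\<lambda>m. zp_norm p s (\<lambda>w. f w - (\<Sum>k<m. lam k *s a k w))) \<longlongrightarrow> 0) sequentially"

definition atomic_norm :: "real \<Rightarrow> real \<Rightarrow> real \<times> real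
    \<Rightarrow> (real \<times> (real^'n::finite) \<Rightarrow> complex^'N::finite) \<Rightarrow> ennreal" where
  "atomic_norm p s c f =
     (INF lam \<in> {lam. \<exists>a. atomic_decomp p s c f lam a}. lp_norm p lam)"

end

theory Submission
  imports Defs
begin

lemma powr_subadd:
  fixes a b r :: real
  assumes "a \<ge> 0" "b \<ge> 0" "0 < r" "r \<le> 1"
  shows "(a + b) powr r \<le> a powr r + b powr r"
proof (cases "a + b = 0")
  case True then show ?thesis using assms by auto
next
  case False
  then have s: "a + b > 0" using assms by auto
  define u where "u = a / (a+b)"
  define v where "v = b / (a+b)"
  have u01: "0 \<le> u" "u \<le> 1" using assms s by (auto simp: u_def)
  have v01: "0 \<le> v" "v \<le> 1" using assms s by (auto simp: v_def)
  have uv: "u + v = 1" using s by (simp add: u_def v_def add_divide_distrib[symmetric])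
  have "u \<le> u powr r"
  proof (cases "u = 0")
    case False
    then have "u powr 1 \<le> u powr r" using u01 assms by (intro powr_mono') auto
    then show ?thesis using False u01 by simp
  qed simp
  moreover have "v \<le> v powr r"
  proof (cases "v = 0")
    case False
    then have "v powr 1 \<le> v powr r" using v01 assms by (intro powr_mono') auto
    then show ?thesis using False v01 by simp
  qed simp
  ultimately have "1 \<le> u powr r + v powr r" using uv by linarith
  then have "(a+b) powr r * 1 \<le> (a+b) powr r * (u powr r + v powr r)"
    by (intro mult_left_mono) auto
  also have "\<dots> = ((a+b) * u) powr r + ((a+b) * v) powr r"
    using s u01 v01 by (simp add: powr_mult distrib_left)
  also have "\<dots> = a powr r + b powr r" using s by (simp add: u_def v_def)
  finally show ?thesis by simp
qed

lemma epowr_ennreal: "x \<ge> 0 \<Longrightarrow> epowr (ennreal x) r = ennreal (x powr r)"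
  by (simp add: epowr_def)

lemma epowr_top[simp]: "epowr top r = top"
  by (simp add: epowr_def)

lemma epowr_zero[simp]: "epowr 0 r = 0"
  by (simp add: epowr_def)

lemma epowr_eq_top_iff[simp]: "epowr x r = top \<longleftrightarrow> x = top"
  by (simp add: epowr_def)

lemma epowr_less_top_iff[simp]: "epowr x r < top \<longleftrightarrow> x < top"
  by (metis epowr_eq_top_iff top.not_eq_extremum)

lemma epowr_one[simp]: "epowr x 1 = x"
  by (cases x) (auto simp: epowr_def)

lemma epowr_mono: assumes "x \<le> y" "r \<ge> 0" shows "epowr x r \<le> epowr y r"
proof (cases "y = top")
  case False
  then have "x \<noteq> top" using assms by (auto simp: top_unique)
  with False assms show ?thesis
    by (cases x; cases y) (auto simp: epowr_def intro!: ennreal_leI powr_mono2)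
qed simp

lemma epowr_epowr: assumes "a > 0" shows "epowr (epowr x a) b = epowr x (a * b)"
  by (cases x) (auto simp: epowr_def powr_powr)

lemma epowr_mult: assumes "r > 0" shows "epowr (x * y) r = epowr x r * epowr y r"
proof (cases "x = top \<or> y = top")
  case True
  then show ?thesis
  proof
    assume x: "x = top"
    show ?thesis
    proof (cases "y = 0")
      case False
      then have "epowr y r \<noteq> 0" using assms
        by (cases y) (auto simp: epowr_def ennreal_eq_0_iff)
      then show ?thesis using x False by (simp add: ennreal_mult_top)
    qed simp
  next
    assume y: "y = top"
    show ?thesis
    proof (cases "x = 0")
      case False
      then have "epowr x r \<noteq> 0" using assms
        by (cases x) (auto simp: epowr_def ennreal_eq_0_iff)
      then show ?thesis using y False by (simp add: ennreal_top_mult)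
    qed simp
  qed
next
  case False
  then obtain a b where "x = ennreal a" "y = ennreal b" "a \<ge> 0" "b \<ge> 0"
    by (cases x; cases y) auto
  then have 1: "x * y = ennreal (a * b)" by (simp add: ennreal_mult)
  have "epowr (x*y) r = ennreal ((a*b) powr r)" unfolding 1 using \<open>a\<ge>0\<close> \<open>b\<ge>0\<close>
    by (simp add: epowr_ennreal)
  also have "\<dots> = ennreal (a powr r) * ennreal (b powr r)"
    using \<open>a\<ge>0\<close> \<open>b\<ge>0\<close> by (simp add: powr_mult ennreal_mult)
  also have "\<dots> = epowr x r * epowr y r" using \<open>x = _\<close> \<open>y = _\<close> \<open>a\<ge>0\<close> \<open>b\<ge>0\<close>
    by (simp add: epowr_ennreal)
  finally show ?thesis .
qed

lemma epowr_add_le: assumes "0 < r" "r \<le> 1" shows "epowr (x + y) r \<le> epowr x r + epowr y r"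
proof (cases "x = top \<or> y = top")
  case False
  then obtain a b where ab: "x = ennreal a" "y = ennreal b" "a \<ge> 0" "b \<ge> 0"
    by (cases x; cases y) auto
  have 1: "x + y = ennreal (a+b)" using ab by (simp add: ennreal_plus)
  have "epowr (x + y) r = ennreal ((a+b) powr r)" unfolding 1 by (rule epowr_ennreal) (use ab in simp)
  also have "\<dots> \<le> ennreal (a powr r + b powr r)"
    by (rule ennreal_leI) (rule powr_subadd[OF ab(3,4) assms])
  also have "\<dots> = epowr x r + epowr y r" using ab by (simp add: epowr_ennreal ennreal_plus)
  finally show ?thesis .
qed auto

lemma epowr_inv: assumes "r > 0" shows "epowr (epowr x r) (1/r) = x"
  using assms by (simp add: epowr_epowr)

lemma epowr_le_iff: assumes "r > 0" shows "epowr x r \<le> epowr y r \<longleftrightarrow> x \<le> y"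
  using epowr_mono[of x y r] epowr_mono[of "epowr x r" "epowr y r" "1/r"] assms
  by (auto simp: epowr_inv)

lemma epowr_measurable[measurable]:
  "f \<in> borel_measurable M \<Longrightarrow> (\<lambda>x. epowr (f x) r) \<in> borel_measurable M"
  unfolding epowr_def by (intro measurable_If) (auto intro!: measurable_ennreal borel_measurable_enn2real)

lemma epowr_pos: "x > 0 \<Longrightarrow> epowr x r > 0"
  by (cases x) (auto simp: epowr_def)


lemma region_eq: "whitney_region c z = {fst z / snd c <..< snd c * fst z} \<times> ball (snd z) (fst c * fst z)"
  unfolding whitney_region_def by auto

lemma region_open: "open (whitney_region c z)"
  unfolding region_eq by (intro open_Times) auto

lemma region_sets[measurable]: "whitney_region c z \<in> sets lborel"
  unfolding sets_lborel by (rule borel_open[OF region_open])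

lemma region_measure:
  fixes z :: "real \<times> (real^'n::finite)"
  assumes "fst c > 0" "snd c > 1" "fst z > 0"
  shows "emeasure lborel (whitney_region c z) =
    ennreal ((snd c * fst z - fst z / snd c) * (unit_ball_vol (CARD('n)) * (fst c * fst z) ^ CARD('n)))"
proof -
  have "emeasure lborel (whitney_region c z) =
      emeasure (lborel \<Otimes>\<^sub>M lborel) ({fst z / snd c <..< snd c * fst z} \<times> ball (snd z) (fst c * fst z))"
    by (simp add: region_eq lborel_prod)
  also have "\<dots> = emeasure lborel {fst z / snd c <..< snd c * fst z} * emeasure lborel (ball (snd z) (fst c * fst z))"
    by (rule lborel.emeasure_pair_measure_Times) auto
  also have "\<dots> = ennreal (snd c * fst z - fst z / snd c) * ennreal (unit_ball_vol (CARD('n)) * (fst c * fst z) ^ CARD('n))"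
  proof -
    have "fst z / snd c < snd c * fst z"
    proof -
      have "fst z / snd c < fst z" using assms by (simp add: divide_less_eq)
      also have "\<dots> < snd c * fst z" using assms by simp
      finally show ?thesis .
    qed
    moreover have "emeasure lborel (ball (snd z) (fst c * fst z)) = ennreal (unit_ball_vol (CARD('n)) * (fst c * fst z) ^ CARD('n))"
      using emeasure_ball[of "fst c * fst z" "snd z"] assms by simp
    ultimately show ?thesis by simp
  qed
  also have "\<dots> = ennreal ((snd c * fst z - fst z / snd c) * (unit_ball_vol (CARD('n)) * (fst c * fst z) ^ CARD('n)))"
  proof -
    have "fst z / snd c < fst z" using assms by (simp add: divide_less_eq)
    also have "\<dots> < snd c * fst z" using assms by simp
    finally have "0 \<le> snd c * fst z - fst z / snd c" by simp
    then show ?thesis using assms by (subst ennreal_mult[symmetric]) auto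
  qed
  finally show ?thesis .
qed

lemma region_pair_sets:
  "{(z, w::real \<times> (real^'n::finite)). w \<in> whitney_region c z} \<in> sets (lborel \<Otimes>\<^sub>M lborel)"
proof -
  have "open {(z, w::real \<times> (real^'n::finite)). w \<in> whitney_region c z}"
  proof -
    have "{(z, w::real \<times> (real^'n::finite)). w \<in> whitney_region c z} =
      {p. fst (snd p) - inverse (snd c) * fst (fst p) > 0} \<inter> {p. snd c * fst (fst p) - fst (snd p) > 0} \<inter>
      {p. fst c * fst (fst p) - dist (snd (fst p)) (snd (snd p)) > 0}"
      by (auto simp: whitney_region_def divide_inverse ac_simps)
    also have "open \<dots>"
      by (intro open_Int open_Collect_less continuous_intros)
    finally show ?thesis .
  qed
  then show ?thesis unfolding lborel_prod sets_lborel by (rule borel_open)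
qed

lemma region_integral_measurable[measurable]:
  fixes F :: "real \<times> (real^'n::finite) \<Rightarrow> ennreal"
  assumes [measurable]: "F \<in> borel_measurable lborel"
  shows "(\<lambda>z. \<integral>\<^sup>+ w \<in> whitney_region c z. F w \<partial>lborel) \<in> borel_measurable lborel"
proof -
  have [measurable]: "(\<lambda>p::(real \<times> (real^'n)) \<times> (real \<times> (real^'n)). indicator {(z, w). w \<in> whitney_region c z} p) \<in> borel_measurable (lborel \<Otimes>\<^sub>M lborel)"
    by (rule borel_measurable_indicator) (rule region_pair_sets[of c])
  have "(\<lambda>p::(real \<times> (real^'n)) \<times> (real \<times> (real^'n)). F (snd p) * indicator {(z, w). w \<in> whitney_region c z} p :: ennreal) \<in> borel_measurable (lborel \<Otimes>\<^sub>M lborel)"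
    by measurable
  then have meas: "(\<lambda>z. \<integral>\<^sup>+ w. F w * indicator {(z, w). w \<in> whitney_region c z} (z, w) \<partial>lborel) \<in> borel_measurable lborel"
    by (rule lborel.borel_measurable_nn_integral_fst[of "\<lambda>p. F (snd p) * indicator _ p", simplified])
  have eq: "\<And>z. (\<integral>\<^sup>+ w. F w * indicator {(z, w). w \<in> whitney_region c z} (z, w) \<partial>lborel) = (\<integral>\<^sup>+ w \<in> whitney_region c z. F w \<partial>lborel)"
    by (auto intro!: nn_integral_cong simp: indicator_def)
  show ?thesis using meas unfolding eq .
qed

lemma region_emeasure_measurable[measurable]:
  "(\<lambda>z::real \<times> (real^'n::finite). emeasure lborel (whitney_region c z)) \<in> borel_measurable lborel"
proof -
  have meas: "(\<lambda>z::real \<times> (real^'n). \<integral>\<^sup>+ w \<in> whitney_region c z. 1 \<partial>lborel) \<in> borel_measurable lborel"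
    by (rule region_integral_measurable) simp
  have eq: "\<And>z. (\<integral>\<^sup>+ w \<in> whitney_region c z. 1 \<partial>lborel) = emeasure lborel (whitney_region c z)"
    by (simp add: nn_integral_indicator[OF region_sets])
  show ?thesis using meas unfolding eq .
qed

lemma whitney_avg_measurable[measurable]:
  fixes g :: "real \<times> (real^'n::finite) \<Rightarrow> 'b::real_normed_vector"
  assumes [measurable]: "g \<in> borel_measurable lborel"
  shows "whitney_avg c g \<in> borel_measurable lborel"
  unfolding whitney_avg_def[abs_def] by measurable


lemma two_mult_le: fixes u v q :: real assumes "q > 0"
  shows "2 * u * v \<le> q*u^2 + v^2/q"
proof -
  have "0 \<le> (q*u - v)^2 / q" using assms by simp
  also have "\<dots> = q*u^2 - 2 * u * v + v^2/q" using assms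
    by (simp add: power2_diff field_simps power2_eq_square)
  finally show ?thesis by simp
qed

lemma norm_sq_add_le: fixes x y :: "'b::real_normed_vector" assumes "q > 0"
  shows "(norm (x + y))^2 \<le> (1+q) * (norm x)^2 + (1 + 1/q) * (norm y)^2"
proof -
  have "(norm (x+y))^2 \<le> (norm x + norm y)^2"
    by (intro power_mono norm_triangle_ineq) auto
  also have "\<dots> = (norm x)^2 + 2*norm x*norm y + (norm y)^2" by (simp add: power2_sum)
  also have "\<dots> \<le> (norm x)^2 + (q*(norm x)^2 + (norm y)^2/q) + (norm y)^2"
    using two_mult_le[OF assms, of "norm x" "norm y"] by linarith
  also have "\<dots> = (1+q) * (norm x)^2 + (1 + 1/q) * (norm y)^2"
    by (simp add: field_simps)
  finally show ?thesis .
qed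

lemma mink:
  fixes g h :: "'a \<Rightarrow> 'b::real_normed_vector" and rho :: "'a \<Rightarrow> ennreal"
  assumes [measurable]: "g \<in> borel_measurable M" "h \<in> borel_measurable M" "rho \<in> borel_measurable M"
  shows "epowr (\<integral>\<^sup>+ w. ennreal ((norm (g w + h w))^2) * rho w \<partial>M) (1/2)
     \<le> epowr (\<integral>\<^sup>+ w. ennreal ((norm (g w))^2) * rho w \<partial>M) (1/2)
      + epowr (\<integral>\<^sup>+ w. ennreal ((norm (h w))^2) * rho w \<partial>M) (1/2)"
    (is "epowr ?C _ \<le> epowr ?A _ + epowr ?B _")
proof (cases "?A = top \<or> ?B = top")
  case True then show ?thesis by auto
next
  case False
  then obtain a b where ab: "?A = ennreal a" "?B = ennreal b" "a \<ge> 0" "b \<ge> 0"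
    by (cases ?A; cases ?B) auto
  show ?thesis
  proof (cases "a = 0")
    case True
    then have "AE w in M. ennreal ((norm (g w))^2) * rho w = 0"
      using ab by (subst nn_integral_0_iff_AE[symmetric]) auto
    then have "AE w in M. ennreal ((norm (g w + h w))^2) * rho w = ennreal ((norm (h w))^2) * rho w"
      by eventually_elim auto
    then have "?C = ?B" by (rule nn_integral_cong_AE)
    then show ?thesis by simp
  next
    case a0: False
    show ?thesis
    proof (cases "b = 0")
      case True
      then have "AE w in M. ennreal ((norm (h w))^2) * rho w = 0"
        using ab by (subst nn_integral_0_iff_AE[symmetric]) auto
      then have "AE w in M. ennreal ((norm (g w + h w))^2) * rho w = ennreal ((norm (g w))^2) * rho w"
        by eventually_elim auto
      then have "?C = ?A" by (rule nn_integral_cong_AE)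
      then show ?thesis by simp
    next
      case b0: False
      have apos: "a > 0" "b > 0" using a0 b0 ab by auto
      define q where "q = sqrt b / sqrt a"
      have thpos: "q > 0" using apos by (simp add: q_def)
      have "?C \<le> (\<integral>\<^sup>+ w. ennreal (1+q) * (ennreal ((norm (g w))^2) * rho w)
                        + ennreal (1+1/q) * (ennreal ((norm (h w))^2) * rho w) \<partial>M)"
      proof (intro nn_integral_mono)
        fix w
        have "ennreal ((norm (g w + h w))^2) \<le> ennreal ((1+q) * (norm (g w))^2 + (1 + 1/q) * (norm (h w))^2)"
          by (intro ennreal_leI norm_sq_add_le thpos)
        also have "\<dots> = ennreal (1+q) * ennreal ((norm (g w))^2) + ennreal (1 + 1/q) * ennreal ((norm (h w))^2)"
          using thpos by (simp add: ennreal_mult ennreal_plus)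
        finally have "ennreal ((norm (g w + h w))^2) * rho w \<le> (ennreal (1+q) * ennreal ((norm (g w))^2) + ennreal (1 + 1/q) * ennreal ((norm (h w))^2)) * rho w"
          by (rule mult_right_mono) simp
        then show "ennreal ((norm (g w + h w))^2) * rho w \<le> ennreal (1+q) * (ennreal ((norm (g w))^2) * rho w)
                        + ennreal (1+1/q) * (ennreal ((norm (h w))^2) * rho w)"
          by (simp add: distrib_right mult.assoc)
      qed
      also have "\<dots> = ennreal (1+q) * ?A + ennreal (1+1/q) * ?B"
        by (simp add: nn_integral_add nn_integral_cmult)
      also have "\<dots> = ennreal ((1+q) * a + (1+1/q) * b)"
        using ab thpos by (simp add: ennreal_mult ennreal_plus)
      also have "(1+q) * a + (1+1/q) * b = (sqrt a + sqrt b)^2"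
        using apos by (simp add: q_def field_simps power2_eq_square real_sqrt_mult[symmetric])
      finally have "?C \<le> ennreal ((sqrt a + sqrt b)^2)" .
      then have "epowr ?C (1/2) \<le> epowr (ennreal ((sqrt a + sqrt b)^2)) (1/2)"
        by (rule epowr_mono) simp
      also have "\<dots> = ennreal (sqrt a + sqrt b)"
        using ab by (simp add: epowr_ennreal powr_half_sqrt)
      also have "\<dots> = epowr ?A (1/2) + epowr ?B (1/2)"
        using ab by (simp add: epowr_ennreal powr_half_sqrt ennreal_plus)
      finally show ?thesis .
    qed
  qed
qed


lemma avg_form:
  fixes g :: "real \<times> (real^'n::finite) \<Rightarrow> 'b::real_normed_vector"
  assumes [measurable]: "g \<in> borel_measurable lborel"
  shows "whitney_avg c g z = epowr (\<integral>\<^sup>+ w. ennreal ((norm (g w))^2) *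
      (indicator (whitney_region c z) w * inverse (emeasure lborel (whitney_region c z))) \<partial>lborel) (1/2)"
proof -
  have "(\<integral>\<^sup>+ w \<in> whitney_region c z. ennreal ((norm (g w))\<^sup>2) \<partial>lborel) / emeasure lborel (whitney_region c z)
    = (\<integral>\<^sup>+ w. ennreal ((norm (g w))^2) * indicator (whitney_region c z) w \<partial>lborel) * inverse (emeasure lborel (whitney_region c z))"
    by (simp add: divide_ennreal_def)
  also have "\<dots> = (\<integral>\<^sup>+ w. ennreal ((norm (g w))^2) * indicator (whitney_region c z) w * inverse (emeasure lborel (whitney_region c z)) \<partial>lborel)"
    by (rule nn_integral_multc[symmetric]) measurable
  finally show ?thesis unfolding whitney_avg_def by (simp add: mult.assoc)
qed

lemma avg_add:
  fixes g h :: "real \<times> (real^'n::finite) \<Rightarrow> 'b::{real_normed_vector, second_countable_topology}"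
  assumes [measurable]: "g \<in> borel_measurable lborel" "h \<in> borel_measurable lborel"
  shows "whitney_avg c (\<lambda>w. g w + h w) z \<le> whitney_avg c g z + whitney_avg c h z"
proof -
  have gh[measurable]: "(\<lambda>w. g w + h w) \<in> borel_measurable lborel" by measurable
  show ?thesis
    unfolding avg_form[OF assms(1)] avg_form[OF assms(2)] avg_form[OF gh]
    by (rule mink) measurable
qed

lemma avg_scale:
  fixes g h :: "real \<times> (real^'n::finite) \<Rightarrow> 'b::real_normed_vector"
  assumes [measurable]: "g \<in> borel_measurable lborel" "h \<in> borel_measurable lborel"
    and k: "k \<ge> 0" "\<And>w. norm (h w) = k * norm (g w)"
  shows "whitney_avg c h z = ennreal k * whitney_avg c g z"
proof -
  let ?r = "\<lambda>w. indicator (whitney_region c z) w * inverse (emeasure lborel (whitney_region c z))"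
  have "(\<integral>\<^sup>+ w. ennreal ((norm (h w))^2) * ?r w \<partial>lborel) = (\<integral>\<^sup>+ w. ennreal (k^2) * (ennreal ((norm (g w))^2) * ?r w) \<partial>lborel)"
    using k by (intro nn_integral_cong) (simp add: power_mult_distrib ennreal_mult mult.assoc)
  also have "\<dots> = ennreal (k^2) * (\<integral>\<^sup>+ w. ennreal ((norm (g w))^2) * ?r w \<partial>lborel)"
    by (rule nn_integral_cmult) measurable
  finally have 1: "(\<integral>\<^sup>+ w. ennreal ((norm (h w))^2) * ?r w \<partial>lborel) = ennreal (k^2) * (\<integral>\<^sup>+ w. ennreal ((norm (g w))^2) * ?r w \<partial>lborel)" .
  have 2: "epowr (ennreal (k^2)) (1/2) = ennreal k" using k by (simp add: epowr_ennreal powr_half_sqrt)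
  show ?thesis unfolding avg_form[OF assms(1)] avg_form[OF assms(2)] 1
    by (simp add: epowr_mult 2)
qed

lemma avg_mono:
  fixes g h :: "real \<times> (real^'n::finite) \<Rightarrow> 'b::real_normed_vector"
  assumes "\<And>w. w \<in> whitney_region c z \<Longrightarrow> norm (g w) \<le> norm (h w)"
  shows "whitney_avg c g z \<le> whitney_avg c h z"
  unfolding whitney_avg_def
proof (intro epowr_mono divide_right_mono_ennreal nn_integral_mono)
  fix w show "ennreal ((norm (g w))\<^sup>2) * indicator (whitney_region c z) w
          \<le> ennreal ((norm (h w))\<^sup>2) * indicator (whitney_region c z) w"
    using assms[of w] by (cases "w \<in> whitney_region c z") (auto intro!: ennreal_leI power_mono)
qed simp

lemma avg_congAE:
  fixes g h :: "real \<times> (real^'n::finite) \<Rightarrow> 'b::real_normed_vector"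
  assumes "AE w in lborel. w \<in> whitney_region c z \<longrightarrow> norm (g w) = norm (h w)"
  shows "whitney_avg c g z = whitney_avg c h z"
proof -
  have "(\<integral>\<^sup>+ w \<in> whitney_region c z. ennreal ((norm (g w))\<^sup>2) \<partial>lborel) = (\<integral>\<^sup>+ w \<in> whitney_region c z. ennreal ((norm (h w))\<^sup>2) \<partial>lborel)"
    using assms by (intro nn_integral_cong_AE) (auto simp: indicator_def)
  then show ?thesis unfolding whitney_avg_def by simp
qed

lemma fst_meas[measurable]: "(fst :: real \<times> 'a::euclidean_space \<Rightarrow> real) \<in> borel_measurable lborel"
  by (simp add: borel_measurable_continuous_onI continuous_on_fst)

lemma snd_meas[measurable]: "(snd :: real \<times> 'a::euclidean_space \<Rightarrow> 'a) \<in> borel_measurable lborel"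
  by (simp add: borel_measurable_continuous_onI continuous_on_snd)

lemma kappa_measurable[measurable]:
  fixes f :: "real \<times> 'a::euclidean_space \<Rightarrow> 'b::{real_normed_vector, second_countable_topology}"
  assumes [measurable]: "f \<in> borel_measurable lborel"
  shows "kappa s f \<in> borel_measurable lborel"
  unfolding kappa_def by measurable

lemma kappa_add: "kappa s (\<lambda>w. f w + g w) = (\<lambda>w. kappa s f w + kappa s g w)"
  unfolding kappa_def by (simp add: scaleR_right_distrib)

lemma kappa_diff: "kappa s (\<lambda>w. f w - g w) = (\<lambda>w. kappa s f w - kappa s g w)"
  unfolding kappa_def by (simp add: scaleR_right_diff_distrib)

definition Zint :: "real \<Rightarrow> real \<Rightarrow> (real \<times> (real^'n::finite) \<Rightarrow> 'b::real_normed_vector) \<Rightarrow> ennreal" where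
  "Zint p s f = (\<integral>\<^sup>+ z \<in> {z. fst z > 0}.
               epowr (whitney_avg (1, 2) (kappa (-s) f) z) p * ennreal (1 / fst z) \<partial>lborel)"

lemma zp_norm_Zint: "zp_norm p s f = epowr (Zint p s f) (1/p)"
  unfolding zp_norm_def Zint_def ..

lemma posset_sets[measurable]: "{z::real \<times> (real^'n::finite). fst z > 0} \<in> sets lborel"
proof -
  have "open {z::real \<times> (real^'n::finite). fst z > 0}"
    by (intro open_Collect_less continuous_intros)
  then show ?thesis by simp
qed

lemma Zint_add:
  fixes f g :: "real \<times> (real^'n::finite) \<Rightarrow> 'b::{real_normed_vector, second_countable_topology}"
  assumes [measurable]: "f \<in> borel_measurable lborel" "g \<in> borel_measurable lborel"
    and p: "0 < p" "p \<le> 1"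
  shows "Zint p s (\<lambda>w. f w + g w) \<le> Zint p s f + Zint p s g"
proof -
  have "Zint p s (\<lambda>w. f w + g w) \<le> (\<integral>\<^sup>+ z. (epowr (whitney_avg (1, 2) (kappa (-s) f) z) p * ennreal (1 / fst z) * indicator {z. fst z > 0} z)
        + (epowr (whitney_avg (1, 2) (kappa (-s) g) z) p * ennreal (1 / fst z) * indicator {z. fst z > 0} z) \<partial>lborel)"
    unfolding Zint_def
  proof (intro nn_integral_mono)
    fix z
    have "epowr (whitney_avg (1, 2) (kappa (- s) (\<lambda>w. f w + g w)) z) p
        \<le> epowr (whitney_avg (1, 2) (kappa (-s) f) z + whitney_avg (1, 2) (kappa (-s) g) z) p"
      unfolding kappa_add using p by (intro epowr_mono avg_add) auto
    also have "\<dots> \<le> epowr (whitney_avg (1, 2) (kappa (-s) f) z) p + epowr (whitney_avg (1, 2) (kappa (-s) g) z) p"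
      using p by (rule epowr_add_le)
    finally show "epowr (whitney_avg (1, 2) (kappa (- s) (\<lambda>w. f w + g w)) z) p * ennreal (1 / fst z) * indicator {z. 0 < fst z} z
         \<le> epowr (whitney_avg (1, 2) (kappa (- s) f) z) p * ennreal (1 / fst z) * indicator {z. 0 < fst z} z +
            epowr (whitney_avg (1, 2) (kappa (- s) g) z) p * ennreal (1 / fst z) * indicator {z. 0 < fst z} z"
      by (auto simp: distrib_right[symmetric] intro!: mult_right_mono)
  qed
  also have "\<dots> = Zint p s f + Zint p s g"
    unfolding Zint_def by (rule nn_integral_add) measurable
  finally show ?thesis .
qed


lemma avg_zero_fun: "whitney_avg c (\<lambda>_. 0::'b::real_normed_vector) z = 0"
  unfolding whitney_avg_def by simp

lemma region_meet:
  assumes "w \<in> whitney_region (1,2) z'" "w \<in> whitney_region c z0" "snd c > 0"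
  shows "z' \<in> whitney_region (fst c + 2 * snd c, 2 * snd c) z0"
proof -
  obtain c0 c1 where c: "c = (c0, c1)" by (cases c)
  obtain t x where z0: "z0 = (t, x)" by (cases z0)
  obtain t' x' where z': "z' = (t', x')" by (cases z')
  obtain tau y where w: "w = (tau, y)" by (cases w)
  have h: "t'/2 < tau" "tau < 2*t'" "dist y x' < t'" "t/c1 < tau" "tau < c1 * t" "dist y x < c0 * t" "c1 > 0"
    using assms unfolding c z0 z' w whitney_region_def by (auto simp: dist_commute)
  have 1: "t / (2*c1) < t'"
  proof -
    have "t / (2*c1) = (t/c1)/2" by simp
    then show ?thesis using h by linarith
  qed
  have 2: "t' < 2 * c1 * t" using h by linarith
  have 3: "dist x' x < (c0 + 2*c1) * t"
  proof -
    have "dist x' x \<le> dist y x' + dist y x" by (metis dist_commute dist_triangle)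
    also have "\<dots> < t' + c0 * t" using h by linarith
    also have "\<dots> < (c0 + 2*c1) * t" using 2 by (simp add: algebra_simps)
    finally show ?thesis .
  qed
  show ?thesis using 1 2 3 unfolding c z0 z' whitney_region_def by (auto simp: dist_commute mult.assoc)
qed

lemma atom_vanish:
  fixes a :: "real \<times> (real^'n::finite) \<Rightarrow> 'b::real_normed_vector"
  assumes "AE w in lborel. w \<notin> whitney_region c z0 \<longrightarrow> a w = 0" "snd c > 0"
    and "z' \<notin> whitney_region (fst c + 2 * snd c, 2 * snd c) z0"
  shows "whitney_avg (1,2) (kappa s a) z' = 0"
proof -
  have "AE w in lborel. w \<in> whitney_region (1,2) z' \<longrightarrow> norm (kappa s a w) = norm (0::'b)"
    using assms(1)
  proof eventually_elim
    case (elim w)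
    show ?case
    proof
      assume "w \<in> whitney_region (1,2) z'"
      then have "w \<notin> whitney_region c z0" using region_meet[of w z' c z0] assms(2,3) by auto
      then show "norm (kappa s a w) = norm (0::'b)" using elim by (simp add: kappa_def)
    qed
  qed
  then have "whitney_avg (1,2) (kappa s a) z' = whitney_avg (1,2) (\<lambda>_. 0::'b) z'"
    by (rule avg_congAE)
  then show ?thesis by (simp add: avg_zero_fun)
qed


lemma atom_inside:
  fixes a :: "real \<times> (real^'n::finite) \<Rightarrow> 'b::{real_normed_vector, second_countable_topology}"
  assumes c: "fst c > 0" "snd c > 1" and t: "fst z0 > 0"
    and [measurable]: "a \<in> borel_measurable lborel"
    and ae: "AE w in lborel. w \<notin> whitney_region c z0 \<longrightarrow> a w = 0"
    and I: "(\<integral>\<^sup>+ w \<in> whitney_region c z0. ennreal ((norm (kappa (-s) a w))\<^sup>2) * ennreal (1 / fst w) \<partial>lborel) \<le> ennreal B"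
    and B: "B \<ge> 0"
    and u: "u = fst z0 / (2 * snd c)" and z': "fst z' \<ge> u"
  shows "whitney_avg (1,2) (kappa (-s) a) z' \<le>
     epowr (ennreal (snd c * fst z0 * B / ((2*u - u/2) * (unit_ball_vol (CARD('n)) * u ^ CARD('n))))) (1/2)"
proof -
  define t where "t = fst z0"
  define c1 where "c1 = snd c"
  define om where "om = unit_ball_vol (CARD('n))"
  have om: "om > 0" by (simp add: om_def)
  have upos: "u > 0" using t c by (simp add: u)
  have t'pos: "fst z' > 0" using upos z' by linarith
  let ?F = "\<lambda>w. ennreal ((norm (kappa (-s) a w))\<^sup>2)"
  have "(\<integral>\<^sup>+ w \<in> whitney_region (1,2) z'. ?F w \<partial>lborel) \<le> (\<integral>\<^sup>+ w. ?F w * indicator (whitney_region c z0) w \<partial>lborel)"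
  proof (rule nn_integral_mono_AE)
    show "AE w in lborel. ?F w * indicator (whitney_region (1,2) z') w \<le> ?F w * indicator (whitney_region c z0) w"
      using ae by eventually_elim (auto simp: indicator_def kappa_def)
  qed
  also have "\<dots> \<le> (\<integral>\<^sup>+ w. (?F w * ennreal (1 / fst w) * indicator (whitney_region c z0) w) * ennreal (c1 * t) \<partial>lborel)"
  proof (rule nn_integral_mono)
    fix w
    show "?F w * indicator (whitney_region c z0) w \<le> (?F w * ennreal (1 / fst w) * indicator (whitney_region c z0) w) * ennreal (c1 * t)"
    proof (cases "w \<in> whitney_region c z0")
      case True
      then have h: "t / c1 < fst w" "fst w < c1 * t" by (auto simp: whitney_region_def t_def c1_def)
      have "t / c1 > 0" using t c by (simp add: t_def c1_def)
      then have wpos: "fst w > 0" using h by linarith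
      have "1 \<le> (1 / fst w) * (c1 * t)" using wpos h by (simp add: field_simps)
      then have "ennreal 1 \<le> ennreal (1 / fst w) * ennreal (c1 * t)"
        using wpos by (simp add: ennreal_mult[symmetric] del: ennreal_1) 
      then have "?F w * 1 \<le> ?F w * (ennreal (1 / fst w) * ennreal (c1 * t))"
        by (intro mult_left_mono) auto
      then show ?thesis using True by (simp add: mult.assoc)
    qed simp
  qed
  also have "\<dots> = (\<integral>\<^sup>+ w \<in> whitney_region c z0. ?F w * ennreal (1 / fst w) \<partial>lborel) * ennreal (c1 * t)"
    by (rule nn_integral_multc) measurable
  also have "\<dots> \<le> ennreal B * ennreal (c1 * t)"
    using I by (rule mult_right_mono) simp
  also have "\<dots> = ennreal (c1 * t * B)"
    using B by (simp add: ennreal_mult'[symmetric] ac_simps)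
  finally have N: "(\<integral>\<^sup>+ w \<in> whitney_region (1,2) z'. ?F w \<partial>lborel) \<le> ennreal (c1 * t * B)" .
  define d where "d = (2 * fst z' - fst z' / 2) * (om * (1 * fst z') ^ CARD('n))"
  have D: "emeasure lborel (whitney_region (1,2) z') = ennreal d"
    unfolding d_def om_def using region_measure[of "(1::real,2::real)" z'] t'pos by simp
  define L where "L = (2*u - u/2) * (om * u ^ CARD('n))"
  have Lpos: "L > 0" using upos om by (simp add: L_def)
  have dL: "L \<le> d" unfolding L_def d_def using z' upos om
    by (intro mult_mono power_mono mult_left_mono) auto
  have "(\<integral>\<^sup>+ w \<in> whitney_region (1,2) z'. ?F w \<partial>lborel) / emeasure lborel (whitney_region (1,2) z')
      \<le> ennreal (c1 * t * B) / ennreal d"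
    unfolding D by (rule divide_right_mono_ennreal[OF N])
  also have "\<dots> = ennreal (c1 * t * B / d)"
    using Lpos dL B c t by (intro divide_ennreal) (auto simp: c1_def t_def)
  also have "\<dots> \<le> ennreal (c1 * t * B / L)"
    using Lpos dL B c t by (intro ennreal_leI divide_left_mono) (auto simp: c1_def t_def)
  finally have "whitney_avg (1,2) (kappa (-s) a) z' \<le> epowr (ennreal (c1 * t * B / L)) (1/2)"
    unfolding whitney_avg_def by (rule epowr_mono) simp
  then show ?thesis by (simp add: c1_def t_def L_def om_def)
qed


lemma atom_alg:
  fixes t c0 c1 Wb p :: real and n :: nat
  assumes t: "t > 0" and c1: "c1 > 0" and Wb: "Wb > 0" and p: "p > 0"
  shows "(c1 * t * t powr (2 * (real n * (1/2 - 1/p))) / ((2*(t/(2*c1)) - (t/(2*c1))/2) * (Wb * (t/(2*c1)) ^ n))) powr (p/2)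
      * (2*c1/t) * ((2*c1*t - t/(2*c1)) * (Wb * ((c0+2*c1)*t)^n))
   = (c1*(2*c1)^(n+1)/((3/2)*Wb)) powr (p/2) * (2*c1) * ((2*c1 - 1/(2*c1)) * Wb * (c0+2*c1)^n)"
proof -
  define A0 where "A0 = c1*(2*c1)^(n+1)/((3/2)*Wb)"
  have A0: "A0 > 0" using c1 Wb by (simp add: A0_def)
  have h1: "t * t powr (2 * (real n * (1/2 - 1/p))) = t powr (1 + 2 * (real n * (1/2 - 1/p)))"
    using t by (simp add: powr_add)
  have h2: "t ^ (n+1) = t powr (real n + 1)"
    using powr_realpow[OF t, of "n+1"] by (simp add: add.commute)
  have h3: "t powr (1 + 2 * (real n * (1/2 - 1/p))) / t powr (real n + 1) = t powr (- (2 * real n / p))"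
    using t p by (simp add: powr_diff[symmetric] field_simps)
  have h4: "(2*(t/(2*c1)) - (t/(2*c1))/2) * (Wb * (t/(2*c1)) ^ n) = (3/2) * Wb * t^(n+1) / (2*c1)^(n+1)"
    using c1 by (simp add: field_simps power_divide)
  have V: "c1 * t * t powr (2 * (real n * (1/2 - 1/p))) / ((2*(t/(2*c1)) - (t/(2*c1))/2) * (Wb * (t/(2*c1)) ^ n))
      = A0 * t powr (- (2 * real n / p))"
  proof -
    have "c1 * t * t powr (2 * (real n * (1/2 - 1/p))) / ((2*(t/(2*c1)) - (t/(2*c1))/2) * (Wb * (t/(2*c1)) ^ n))
       = c1 * (t * t powr (2 * (real n * (1/2 - 1/p)))) / ((3/2) * Wb * t^(n+1) / (2*c1)^(n+1))"
      unfolding h4 by (simp add: mult.assoc)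
    also have "\<dots> = A0 * ((t * t powr (2 * (real n * (1/2 - 1/p)))) / t^(n+1))"
      using c1 Wb t by (simp add: A0_def field_simps)
    also have "\<dots> = A0 * t powr (- (2 * real n / p))"
      unfolding h1 h2 h3 ..
    finally show ?thesis .
  qed
  have h5: "(A0 * t powr (- (2 * real n / p))) powr (p/2) = A0 powr (p/2) * t powr (- real n)"
    using A0 t p by (simp add: powr_mult powr_powr)
  have h6: "t powr (- real n) * t ^ n = 1"
    using t by (simp add: powr_minus powr_realpow)
  have "t powr (- real n) * (2*c1/t) * ((2*c1*t - t/(2*c1)) * (Wb * ((c0+2*c1)*t)^n))
      = (t powr (- real n) * t ^ n) * ((2*c1/t) * (2*c1*t - t/(2*c1))) * Wb * (c0+2*c1)^n"
    by (simp add: power_mult_distrib ac_simps)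
  also have "\<dots> = (2*c1) * ((2*c1 - 1/(2*c1))) * Wb * (c0+2*c1)^n"
    unfolding h6 using t c1 by (simp add: field_simps)
  finally have h7: "t powr (- real n) * (2*c1/t) * ((2*c1*t - t/(2*c1)) * (Wb * ((c0+2*c1)*t)^n))
      = (2*c1) * ((2*c1 - 1/(2*c1))) * Wb * (c0+2*c1)^n" .
  have "A0 powr (p/2) * t powr (- real n) * (2*c1/t) * ((2*c1*t - t/(2*c1)) * (Wb * ((c0+2*c1)*t)^n))
     = A0 powr (p/2) * (t powr (- real n) * (2*c1/t) * ((2*c1*t - t/(2*c1)) * (Wb * ((c0+2*c1)*t)^n)))"
    by (simp only: mult.assoc)
  also have "\<dots> = A0 powr (p/2) * ((2*c1) * ((2*c1 - 1/(2*c1))) * Wb * (c0+2*c1)^n)"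
    by (simp only: h7)
  also have "\<dots> = A0 powr (p/2) * (2*c1) * ((2*c1 - 1/(2*c1)) * Wb * (c0+2*c1)^n)"
    by (simp only: mult.assoc)
  finally show ?thesis unfolding V h5 A0_def[symmetric] .
qed


definition Katom :: "real \<Rightarrow> real \<times> real \<Rightarrow> nat \<Rightarrow> real" where
  "Katom p c n = (snd c*(2* snd c)^(n+1)/((3/2)*unit_ball_vol (real n))) powr (p/2) * (2* snd c)
     * ((2* snd c - 1/(2* snd c)) * unit_ball_vol (real n) * (fst c+2* snd c)^n)"

lemma atom_Zint:
  fixes a :: "real \<times> (real^'n::finite) \<Rightarrow> 'b::{real_normed_vector, second_countable_topology}"
  assumes wp: "whitney_param c" and p: "0 < p" and at: "Zp_atom_at p s c z0 a"
  shows "Zint p s a \<le> ennreal (Katom p c CARD('n))"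
proof -
  define t where "t = fst z0"
  define c0 where "c0 = fst c"
  define c1 where "c1 = snd c"
  define n where "n = CARD('n)"
  define Wb where "Wb = unit_ball_vol (real n)"
  have Wb: "Wb > 0" by (simp add: Wb_def)
  have t: "t > 0" and [measurable]: "a \<in> borel_measurable lborel"
    and ae: "AE w in lborel. w \<notin> whitney_region c z0 \<longrightarrow> a w = 0"
    and I0: "epowr (\<integral>\<^sup>+ w \<in> whitney_region c z0. ennreal ((norm (kappa (-s) a w))\<^sup>2) * ennreal (1 / fst w) \<partial>lborel) (1/2)
       \<le> ennreal (t powr (real n * (1/2 - 1/p)))"
    using at unfolding Zp_atom_at_def t_def n_def by auto
  have c: "c0 > 0" "c1 > 3/2" using wp by (auto simp: whitney_param_def c0_def c1_def)
  define e where "e = real n * (1/2 - 1/p)"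
  define B where "B = t powr (2 * e)"
  have B: "B \<ge> 0" by (simp add: B_def)
  let ?I = "(\<integral>\<^sup>+ w \<in> whitney_region c z0. ennreal ((norm (kappa (-s) a w))\<^sup>2) * ennreal (1 / fst w) \<partial>lborel)"
  have I: "?I \<le> ennreal B"
  proof -
    have "?I = epowr (epowr ?I (1/2)) 2" by (simp add: epowr_epowr)
    also have "\<dots> \<le> epowr (ennreal (t powr e)) 2"
      using I0 by (intro epowr_mono) (auto simp: e_def)
    also have "\<dots> = ennreal B" by (simp add: epowr_ennreal B_def powr_powr mult.commute)
    finally show ?thesis .
  qed
  define u where "u = t / (2 * c1)"
  define V where "V = c1 * t * B / ((2*u - u/2) * (Wb * u ^ n))"
  have upos: "u > 0" using t c by (simp add: u_def)
  have V: "V \<ge> 0" using upos Wb B t c by (simp add: V_def)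
  define c' where "c' = (c0 + 2 * c1, 2 * c1)"
  define K2 where "K2 = V powr (p/2) * (2*c1/t)"
  have bound: "epowr (whitney_avg (1, 2) (kappa (-s) a) z) p * ennreal (1 / fst z) * indicator {z. 0 < fst z} z
      \<le> ennreal K2 * indicator (whitney_region c' z0) z" for z
  proof (cases "fst z > 0")
    case False then show ?thesis by simp
  next
    case zpos: True
    show ?thesis
    proof (cases "z \<in> whitney_region c' z0")
      case False
      have "whitney_avg (1, 2) (kappa (-s) a) z = 0"
        using atom_vanish[OF ae, of z "-s"] c False by (simp add: c'_def c0_def c1_def)
      then show ?thesis by simp
    next
      case True
      then have zu: "u < fst z" by (simp add: whitney_region_def c'_def u_def t_def)
      have "whitney_avg (1, 2) (kappa (-s) a) z \<le> epowr (ennreal V) (1/2)"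
        using atom_inside[of c z0 a s B u z] c t ae I B zu
        by (simp add: c0_def c1_def t_def u_def V_def Wb_def n_def)
      then have "epowr (whitney_avg (1, 2) (kappa (-s) a) z) p \<le> epowr (epowr (ennreal V) (1/2)) p"
        using p by (intro epowr_mono) auto
      also have "\<dots> = ennreal (V powr (p/2))" using V by (simp add: epowr_epowr epowr_ennreal powr_powr)
      finally have 1: "epowr (whitney_avg (1, 2) (kappa (-s) a) z) p \<le> ennreal (V powr (p/2))" .
      have 2: "ennreal (1 / fst z) \<le> ennreal (2*c1/t)"
      proof (intro ennreal_leI)
        have "2*c1/t = 1/u" using t c by (simp add: u_def)
        then show "1 / fst z \<le> 2*c1/t" using zu upos by (simp add: frac_le)
      qed
      have "epowr (whitney_avg (1, 2) (kappa (-s) a) z) p * ennreal (1 / fst z) \<le> ennreal (V powr (p/2)) * ennreal (2*c1/t)"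
        by (intro mult_mono 1 2) auto
      also have "\<dots> = ennreal K2" using t c by (simp add: K2_def ennreal_mult[symmetric])
      finally show ?thesis using True zpos by simp
    qed
  qed
  have "Zint p s a \<le> (\<integral>\<^sup>+ z. ennreal K2 * indicator (whitney_region c' z0) z \<partial>lborel)"
    unfolding Zint_def by (intro nn_integral_mono bound)
  also have "\<dots> = ennreal K2 * emeasure lborel (whitney_region c' z0)"
    by (rule nn_integral_cmult_indicator) (rule region_sets)
  also have "emeasure lborel (whitney_region c' z0) = ennreal ((2*c1*t - t/(2*c1)) * (Wb * ((c0+2*c1)*t)^n))"
    using region_measure[of c' z0] c t by (simp add: c'_def t_def n_def Wb_def)
  also have "ennreal K2 * \<dots> = ennreal (K2 * ((2*c1*t - t/(2*c1)) * (Wb * ((c0+2*c1)*t)^n)))"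
  proof -
    have "t/(2*c1) < t" using t c by (simp add: divide_less_eq)
    also have "t < 2*c1*t" using t c by simp
    finally have "t/(2*c1) < 2*c1*t" .
    then show ?thesis using t c Wb by (subst ennreal_mult) (auto simp: K2_def)
  qed
  also have "K2 * ((2*c1*t - t/(2*c1)) * (Wb * ((c0+2*c1)*t)^n)) = Katom p c CARD('n)"
    unfolding K2_def V_def u_def B_def e_def Katom_def
    using atom_alg[of t c1 Wb p n c0] t c Wb p
    by (simp add: c0_def c1_def Wb_def n_def mult.assoc)
  finally show ?thesis by simp
qed


lemma norm_smult_vec: "norm (x *s (v::complex^'N::finite)) = norm x * norm v"
  by (simp add: norm_vec_def norm_mult L2_set_right_distrib)

lemma smult_measurable[measurable]:
  assumes "g \<in> borel_measurable M"
  shows "(\<lambda>w. (x::complex) *s (g w :: complex^'N::finite)) \<in> borel_measurable M"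
proof -
  have "(\<lambda>v::complex^'N. x *s v) = (\<lambda>v. \<chi> i. x * v$i)" by (auto simp: vec_eq_iff)
  moreover have "continuous_on UNIV (\<lambda>v::complex^'N. \<chi> i. x * v$i)"
    by (intro continuous_intros)
  ultimately have "(\<lambda>v::complex^'N. x *s v) \<in> borel_measurable borel"
    by (simp add: borel_measurable_continuous_onI)
  then show ?thesis using assms by (rule measurable_compose[rotated])
qed

lemma Zint_zero: "Zint p s (\<lambda>w::real \<times> (real^'n::finite). 0::'b::real_normed_vector) = 0"
proof -
  have "kappa (-s) (\<lambda>w::real \<times> (real^'n). 0::'b) = (\<lambda>w. 0)" by (simp add: kappa_def)
  then have "\<And>z. whitney_avg (1,2) (kappa (-s) (\<lambda>w::real \<times> (real^'n). 0::'b)) z = 0" by (simp add: avg_zero_fun)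
  then show ?thesis unfolding Zint_def by simp
qed

lemma Zint_smult:
  fixes a :: "real \<times> (real^'n::finite) \<Rightarrow> complex^'N::finite"
  assumes [measurable]: "a \<in> borel_measurable lborel" and p: "p > 0"
  shows "Zint p s (\<lambda>w. x *s a w) = ennreal (norm x powr p) * Zint p s a"
proof -
  have eq: "whitney_avg (1,2) (kappa (-s) (\<lambda>w. x *s a w)) z = ennreal (norm x) * whitney_avg (1,2) (kappa (-s) a) z" for z
    by (rule avg_scale) (auto simp: kappa_def norm_smult_vec)
  have "Zint p s (\<lambda>w. x *s a w) = (\<integral>\<^sup>+ z. ennreal (norm x powr p) * (epowr (whitney_avg (1, 2) (kappa (-s) a) z) p * ennreal (1 / fst z) * indicator {z. 0 < fst z} z) \<partial>lborel)"
    unfolding Zint_def eq using p by (intro nn_integral_cong) (simp add: epowr_mult epowr_ennreal mult.assoc)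
  also have "\<dots> = ennreal (norm x powr p) * Zint p s a"
    unfolding Zint_def by (rule nn_integral_cmult) measurable
  finally show ?thesis .
qed

lemma Zint_sum:
  fixes g :: "nat \<Rightarrow> real \<times> (real^'n::finite) \<Rightarrow> 'b::{real_normed_vector, second_countable_topology}"
  assumes [measurable]: "\<And>k. g k \<in> borel_measurable lborel" and p: "0 < p" "p \<le> 1"
  shows "Zint p s (\<lambda>w. \<Sum>k<m. g k w) \<le> (\<Sum>k<m. Zint p s (g k))"
proof (induction m)
  case 0 then show ?case by (simp add: Zint_zero)
next
  case (Suc m)
  have "Zint p s (\<lambda>w. \<Sum>k<Suc m. g k w) = Zint p s (\<lambda>w. (\<Sum>k<m. g k w) + g m w)" by simp
  also have "\<dots> \<le> Zint p s (\<lambda>w. \<Sum>k<m. g k w) + Zint p s (g m)"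
    using p by (intro Zint_add) measurable
  also have "\<dots> \<le> (\<Sum>k<m. Zint p s (g k)) + Zint p s (g m)"
    using Suc by (rule add_right_mono)
  finally show ?case by simp
qed

lemma epowr_tendsto_0:
  assumes "(X \<longlongrightarrow> 0) F" "r > 0"
  shows "((\<lambda>m. epowr (X m) r) \<longlongrightarrow> 0) F"
proof (rule order_tendstoI)
  fix y :: ennreal assume "y > 0"
  then obtain e where e: "e > 0" "ennreal e \<le> y"
  proof (cases y)
    case (real r) then show ?thesis using that[of r] \<open>y > 0\<close> by auto
  next
    case top then show ?thesis using that[of 1] by auto
  qed
  have "ennreal (e powr (1/r)) > 0" using e by simp
  then have "\<forall>\<^sub>F m in F. X m < ennreal (e powr (1/r))"
    by (rule order_tendstoD(2)[OF assms(1)])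
  then show "\<forall>\<^sub>F m in F. epowr (X m) r < y"
  proof eventually_elim
    case (elim m)
    then have "X m \<noteq> top" by auto
    then obtain xm where xm: "X m = ennreal xm" "xm \<ge> 0" by (cases "X m") auto
    then have "xm < e powr (1/r)" using elim by (simp add: ennreal_less_iff)
    then have "xm powr r < (e powr (1/r)) powr r" using xm assms(2) by (intro powr_less_mono2) auto
    also have "\<dots> = e" using e assms(2) by (simp add: powr_powr)
    finally show ?case using xm e by (simp add: epowr_ennreal) (metis ennreal_lessI le_less_trans not_le e(1))
  qed
qed simp

lemma partB:
  fixes f :: "real \<times> (real^'n::finite) \<Rightarrow> complex^'N::finite"
  assumes wp: "whitney_param c" and p: "0 < p" "p \<le> 1"
    and [measurable]: "f \<in> borel_measurable lborel"
    and dec: "atomic_decomp p s c f lam a"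
  shows "Zint p s f \<le> ennreal (Katom p c CARD('n)) * lp_sum p lam"
proof -
  define K where "K = Katom p c CARD('n)"
  have at: "\<And>k. \<exists>z. Zp_atom_at p s c z (a k)" using dec unfolding atomic_decomp_def Zp_atom_def by auto
  have am[measurable]: "\<And>k. a k \<in> borel_measurable lborel" using at unfolding Zp_atom_at_def by blast
  have aZ: "\<And>k. Zint p s (a k) \<le> ennreal K" using at atom_Zint[OF wp p(1)] unfolding K_def by blast
  have conv: "((\<lambda>m. zp_norm p s (\<lambda>w. f w - (\<Sum>k<m. lam k *s a k w))) \<longlongrightarrow> 0) sequentially"
    using dec unfolding atomic_decomp_def by auto
  have conv2: "((\<lambda>m. Zint p s (\<lambda>w. f w - (\<Sum>k<m. lam k *s a k w))) \<longlongrightarrow> 0) sequentially"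
  proof -
    have "((\<lambda>m. epowr (zp_norm p s (\<lambda>w. f w - (\<Sum>k<m. lam k *s a k w))) p) \<longlongrightarrow> 0) sequentially"
      by (rule epowr_tendsto_0[OF conv p(1)])
    moreover have "\<And>m. epowr (zp_norm p s (\<lambda>w. f w - (\<Sum>k<m. lam k *s a k w))) p = Zint p s (\<lambda>w. f w - (\<Sum>k<m. lam k *s a k w))"
      unfolding zp_norm_Zint using p by (simp add: epowr_epowr)
    ultimately show ?thesis by simp
  qed
  have bnd: "Zint p s f \<le> Zint p s (\<lambda>w. f w - (\<Sum>k<m. lam k *s a k w)) + ennreal K * lp_sum p lam" for m
  proof -
    have "Zint p s f = Zint p s (\<lambda>w. (f w - (\<Sum>k<m. lam k *s a k w)) + (\<Sum>k<m. lam k *s a k w))" by simp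
    also have "\<dots> \<le> Zint p s (\<lambda>w. f w - (\<Sum>k<m. lam k *s a k w)) + Zint p s (\<lambda>w. \<Sum>k<m. lam k *s a k w)"
      using p by (intro Zint_add) measurable
    also have "Zint p s (\<lambda>w. \<Sum>k<m. lam k *s a k w) \<le> (\<Sum>k<m. Zint p s (\<lambda>w. lam k *s a k w))"
      using p by (intro Zint_sum) measurable
    also have "\<dots> = (\<Sum>k<m. ennreal (norm (lam k) powr p) * Zint p s (a k))"
      using p by (intro sum.cong refl Zint_smult) measurable
    also have "\<dots> \<le> (\<Sum>k<m. ennreal (norm (lam k) powr p) * ennreal K)"
      by (intro sum_mono mult_left_mono aZ) auto
    also have "\<dots> = ennreal K * (\<Sum>k<m. ennreal (norm (lam k) powr p))"
      unfolding sum_distrib_left by (simp only: mult.commute)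
    also have "\<dots> \<le> ennreal K * lp_sum p lam"
      unfolding lp_sum_def by (intro mult_left_mono sum_le_suminf) auto
    finally show ?thesis by (simp add: add_left_mono)
  qed
  have "((\<lambda>m. Zint p s (\<lambda>w. f w - (\<Sum>k<m. lam k *s a k w)) + ennreal K * lp_sum p lam) \<longlongrightarrow> 0 + ennreal K * lp_sum p lam) sequentially"
    by (intro tendsto_add conv2 tendsto_const)
  then have "Zint p s f \<le> 0 + ennreal K * lp_sum p lam"
    by (rule LIMSEQ_le_const) (use bnd in auto)
  then show ?thesis by (simp add: K_def)
qed


definition P2 :: "int \<Rightarrow> real" where "P2 j = 2 powr (real_of_int j)"

lemma P2_pos[simp]: "P2 j > 0" by (simp add: P2_def)

lemma P2_succ: "2 powr (real_of_int j + 1) = 2 * P2 j"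
  by (simp add: P2_def powr_add)

definition idx :: "real \<Rightarrow> real \<times> (real^'n::finite) \<Rightarrow> int \<times> ('n \<Rightarrow> int)" where
  "idx h w = (\<lfloor>log 2 (fst w)\<rfloor>, \<lambda>i. \<lfloor>snd w $ i / (h * P2 \<lfloor>log 2 (fst w)\<rfloor>)\<rfloor>)"

definition Qc :: "real \<Rightarrow> int \<times> ('n::finite \<Rightarrow> int) \<Rightarrow> (real \<times> (real^'n)) set" where
  "Qc h q = {w. fst w > 0 \<and> idx h w = q}"

definition ctr :: "real \<Rightarrow> int \<times> ('n::finite \<Rightarrow> int) \<Rightarrow> real \<times> (real^'n)" where
  "ctr h q = (4/3 * P2 (fst q), \<chi> i. (of_int (snd q i) + 1/2) * (h * P2 (fst q)))"

lemma floor_log_iff: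
  assumes "t > 0"
  shows "\<lfloor>log 2 t\<rfloor> = j \<longleftrightarrow> P2 j \<le> t \<and> t < 2 * P2 j"
proof -
  have "\<lfloor>log 2 t\<rfloor> = j \<longleftrightarrow> real_of_int j \<le> log 2 t \<and> log 2 t < real_of_int j + 1"
    by (simp add: floor_eq_iff)
  also have "\<dots> \<longleftrightarrow> P2 j \<le> t \<and> t < 2 * P2 j"
    using assms by (simp add: le_log_iff log_less_iff P2_def powr_add mult.commute)
  finally show ?thesis .
qed

lemma floor_div_iff:
  assumes "L > 0"
  shows "\<lfloor>x / L\<rfloor> = k \<longleftrightarrow> of_int k * L \<le> x \<and> x < (of_int k + 1) * L"
  using assms by (simp add: floor_eq_iff le_divide_eq divide_less_eq)

lemma Qc_char:
  assumes h: "h > 0"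
  shows "w \<in> Qc h (j, v) \<longleftrightarrow> P2 j \<le> fst w \<and> fst w < 2 * P2 j \<and>
     (\<forall>i. of_int (v i) * (h * P2 j) \<le> snd w $ i \<and> snd w $ i < (of_int (v i) + 1) * (h * P2 j))"
proof
  assume w: "w \<in> Qc h (j, v)"
  then have t: "fst w > 0" and fl: "\<lfloor>log 2 (fst w)\<rfloor> = j"
    and fv: "\<And>i. \<lfloor>snd w $ i / (h * P2 j)\<rfloor> = v i"
    by (auto simp: Qc_def idx_def)
  show "P2 j \<le> fst w \<and> fst w < 2 * P2 j \<and>
     (\<forall>i. of_int (v i) * (h * P2 j) \<le> snd w $ i \<and> snd w $ i < (of_int (v i) + 1) * (h * P2 j))"
    using floor_log_iff[OF t] fl fv floor_div_iff[of "h * P2 j"] h by auto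
next
  assume H: "P2 j \<le> fst w \<and> fst w < 2 * P2 j \<and>
     (\<forall>i. of_int (v i) * (h * P2 j) \<le> snd w $ i \<and> snd w $ i < (of_int (v i) + 1) * (h * P2 j))"
  then have t: "fst w > 0" using P2_pos[of j] by linarith
  have fl: "\<lfloor>log 2 (fst w)\<rfloor> = j" using floor_log_iff[OF t] H by auto
  have fv: "\<lfloor>snd w $ i / (h * P2 j)\<rfloor> = v i" for i
    using floor_div_iff[of "h * P2 j"] H h by auto
  show "w \<in> Qc h (j, v)" using t fl fv by (auto simp: Qc_def idx_def)
qed

lemma comp_meas[measurable]: "(\<lambda>w::real \<times> (real^'n::finite). snd w $ i) \<in> borel_measurable lborel"
proof -
  have "continuous_on UNIV (\<lambda>w::real \<times> (real^'n::finite). snd w $ i)"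
    by (intro continuous_intros)
  then show ?thesis by (simp add: borel_measurable_continuous_onI)
qed

lemma Qc_sets[measurable]:
  assumes h: "h > 0"
  shows "Qc h q \<in> sets lborel"
proof -
  obtain j v where q: "q = (j, v)" by (cases q)
  have "Qc h q = {w \<in> space lborel. P2 j \<le> fst w \<and> fst w < 2 * P2 j \<and>
     (\<forall>i. of_int (v i) * (h * P2 j) \<le> snd w $ i \<and> snd w $ i < (of_int (v i) + 1) * (h * P2 j))}"
    using Qc_char[OF h] unfolding q by auto
  also have "\<dots> \<in> sets lborel" by measurable
  finally show ?thesis .
qed

lemma Qc_disj: "q \<noteq> q' \<Longrightarrow> Qc h q \<inter> Qc h q' = {}"
  by (auto simp: Qc_def)

lemma Qc_cover: "fst w > 0 \<Longrightarrow> w \<in> Qc h (idx h w)"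
  by (simp add: Qc_def)

lemma Qc_pos: "w \<in> Qc h q \<Longrightarrow> fst w > 0"
  by (simp add: Qc_def)


lemma sum_abs_lt:
  fixes x y :: "real^'n::finite"
  assumes "\<And>i. \<bar>x$i - y$i\<bar> < L"
  shows "dist x y < real CARD('n) * L"
proof -
  have "dist x y = norm (x - y)" by (simp add: dist_norm)
  also have "\<dots> \<le> (\<Sum>i\<in>UNIV. \<bar>(x - y)$i\<bar>)" by (rule norm_le_l1_cart)
  also have "\<dots> < (\<Sum>i\<in>(UNIV::'n set). L)"
    using assms by (intro sum_strict_mono) auto
  also have "\<dots> = real CARD('n) * L" by simp
  finally show ?thesis .
qed

lemma sum_abs_le:
  fixes x y :: "real^'n::finite"
  assumes "\<And>i. \<bar>x$i - y$i\<bar> \<le> L"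
  shows "dist x y \<le> real CARD('n) * L"
proof -
  have "dist x y = norm (x - y)" by (simp add: dist_norm)
  also have "\<dots> \<le> (\<Sum>i\<in>UNIV. \<bar>(x - y)$i\<bar>)" by (rule norm_le_l1_cart)
  also have "\<dots> \<le> (\<Sum>i\<in>(UNIV::'n set). L)"
    using assms by (intro sum_mono) auto
  also have "\<dots> = real CARD('n) * L" by simp
  finally show ?thesis .
qed

lemma Qc_in_region:
  fixes q :: "int \<times> ('n::finite \<Rightarrow> int)"
  assumes wp: "whitney_param c" and h: "h > 0" "h * real CARD('n) < fst c"
  shows "Qc h q \<subseteq> whitney_region c (ctr h q)"
proof
  fix w assume w: "w \<in> Qc h q"
  obtain j v where q: "q = (j, v)" by (cases q)
  define P where "P = P2 j"
  define L where "L = h * P"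
  have P: "P > 0" by (simp add: P_def)
  have H: "P \<le> fst w" "fst w < 2 * P"
    "\<And>i. of_int (v i) * L \<le> snd w $ i" "\<And>i. snd w $ i < (of_int (v i) + 1) * L"
    using w Qc_char[OF h(1), of w j v] unfolding q P_def L_def by auto
  have c: "fst c > 0" "snd c > 3/2" using wp by (auto simp: whitney_param_def)
  have 1: "4/3 * P / snd c < fst w"
  proof -
    have "4/3 * P / snd c < P" using P c by (simp add: divide_less_eq)
    then show ?thesis using H by linarith
  qed
  have 2: "fst w < snd c * (4/3 * P)"
  proof -
    have "2 * P \<le> snd c * (4/3 * P)" using P c by (simp add: mult_right_mono)
    then show ?thesis using H by linarith
  qed
  have "dist (\<chi> i. (of_int (v i) + 1/2) * L) (snd w) \<le> real CARD('n) * (L/2)"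
  proof (rule sum_abs_le)
    fix i
    have a: "(\<chi> i. (of_int (v i) + 1/2) * L) $ i = of_int (v i) * L + L/2" by (simp add: distrib_right)
    show "\<bar>(\<chi> i. (of_int (v i) + 1/2) * L) $ i - snd w $ i\<bar> \<le> L/2"
      unfolding a abs_le_iff using H(3,4)[of i] by (simp add: distrib_right)
  qed
  also have "real CARD('n) * (L/2) < fst c * (4/3 * P)"
  proof -
    have "real CARD('n) * (L/2) = (h * real CARD('n)) * P / 2" by (simp add: L_def)
    also have "\<dots> < fst c * P / 2" using h P by (simp add: divide_strict_right_mono)
    also have "\<dots> < fst c * (4/3 * P)" using c P by simp
    finally show ?thesis .
  qed
  finally have 3: "dist (\<chi> i. (of_int (v i) + 1/2) * L) (snd w) < fst c * (4/3 * P)" .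
  show "w \<in> whitney_region c (ctr h q)"
    using 1 2 3 unfolding whitney_region_def ctr_def q P_def L_def by simp
qed

lemma Qc_in_avg:
  fixes q :: "int \<times> ('n::finite \<Rightarrow> int)"
  assumes h: "h > 0" "h * real CARD('n) < 1" and z: "z \<in> Qc h q" and w: "w \<in> Qc h q"
  shows "w \<in> whitney_region (1,2) z"
proof -
  obtain j v where q: "q = (j, v)" by (cases q)
  define P where "P = P2 j"
  define L where "L = h * P"
  have P: "P > 0" by (simp add: P_def)
  have H: "P \<le> fst w" "fst w < 2 * P"
    "\<And>i. of_int (v i) * L \<le> snd w $ i" "\<And>i. snd w $ i < (of_int (v i) + 1) * L"
    using w Qc_char[OF h(1), of w j v] unfolding q P_def L_def by auto
  have Z: "P \<le> fst z" "fst z < 2 * P"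
    "\<And>i. of_int (v i) * L \<le> snd z $ i" "\<And>i. snd z $ i < (of_int (v i) + 1) * L"
    using z Qc_char[OF h(1), of z j v] unfolding q P_def L_def by auto
  have "dist (snd z) (snd w) < real CARD('n) * L"
  proof (rule sum_abs_lt)
    fix i show "\<bar>snd z $ i - snd w $ i\<bar> < L"
      using H(3,4)[of i] Z(3,4)[of i] by (simp add: algebra_simps abs_less_iff)
  qed
  also have "real CARD('n) * L \<le> fst z"
  proof -
    have "real CARD('n) * L = (h * real CARD('n)) * P" by (simp add: L_def)
    also have "\<dots> \<le> 1 * P" using h P by (intro mult_right_mono) auto
    finally show ?thesis using Z by simp
  qed
  finally have 3: "dist (snd z) (snd w) < fst z" .
  show ?thesis using H Z 3 unfolding whitney_region_def by auto
qed

lemma box_measure: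
  fixes x :: "real^'n::finite"
  assumes "P > 0" "r \<ge> 0"
  shows "emeasure lborel ({P<..<2*P} \<times> ball x r) = ennreal (P * (unit_ball_vol (CARD('n)) * r ^ CARD('n)))"
proof -
  have "emeasure lborel ({P<..<2*P} \<times> ball x r) = emeasure (lborel \<Otimes>\<^sub>M lborel) ({P<..<2*P} \<times> ball x r)"
    by (simp add: lborel_prod)
  also have "\<dots> = emeasure lborel {P<..<2*P} * emeasure lborel (ball x r)"
    by (rule lborel.emeasure_pair_measure_Times) auto
  also have "\<dots> = ennreal P * ennreal (unit_ball_vol (CARD('n)) * r ^ CARD('n))"
    using assms emeasure_ball[of r x] by simp
  also have "\<dots> = ennreal (P * (unit_ball_vol (CARD('n)) * r ^ CARD('n)))"
    using assms by (simp add: ennreal_mult)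
  finally show ?thesis .
qed

lemma Qc_lower:
  fixes j :: int and v :: "'n::finite \<Rightarrow> int"
  assumes h: "h > 0"
  shows "ennreal (unit_ball_vol (CARD('n)) * (h/2) ^ CARD('n) * P2 j ^ CARD('n) / 2)
     \<le> (\<integral>\<^sup>+ z \<in> Qc h (j, v). ennreal (1 / fst z) \<partial>lborel)"
proof -
  define P where "P = P2 j"
  define L where "L = h * P"
  have P: "P > 0" by (simp add: P_def)
  define xc where "xc = ((\<chi> i. (of_int (v i) + 1/2) * L) :: real^'n)"
  define B where "B = {P<..<2*P} \<times> ball xc (L/2)"
  have BQ: "B \<subseteq> Qc h (j, v)"
  proof
    fix w assume "w \<in> B"
    then have w: "P < fst w" "fst w < 2 * P" "dist xc (snd w) < L/2" by (auto simp: B_def)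
    have "\<bar>xc $ i - snd w $ i\<bar> < L/2" for i
      using component_le_norm_cart[of "xc - snd w" i] w(3) by (simp add: dist_norm)
    moreover have "xc $ i = of_int (v i) * L + L/2" for i by (simp add: xc_def distrib_right)
    ultimately have "of_int (v i) * L \<le> snd w $ i \<and> snd w $ i < (of_int (v i) + 1) * L" for i
      unfolding abs_less_iff by (simp add: distrib_right) (smt (verit))
    then show "w \<in> Qc h (j, v)" using Qc_char[OF h, of w j v] w unfolding P_def L_def by auto
  qed
  have "(\<integral>\<^sup>+ z. ennreal (1 / (2*P)) * indicator B z \<partial>lborel) \<le> (\<integral>\<^sup>+ z \<in> Qc h (j, v). ennreal (1 / fst z) \<partial>lborel)"
  proof (intro nn_integral_mono)
    fix z show "ennreal (1 / (2*P)) * indicator B z \<le> ennreal (1 / fst z) * indicator (Qc h (j, v)) z"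
    proof (cases "z \<in> B")
      case True
      then have "P < fst z" "fst z < 2 * P" by (auto simp: B_def)
      then have "1 / (2*P) \<le> 1 / fst z" using P by (intro divide_left_mono) auto
      moreover have "z \<in> Qc h (j, v)" using True BQ by auto
      ultimately show ?thesis using True by (auto intro: ennreal_leI)
    qed simp
  qed
  moreover have "(\<integral>\<^sup>+ z. ennreal (1 / (2*P)) * indicator B z \<partial>lborel) = ennreal (1 / (2*P)) * emeasure lborel B"
    by (rule nn_integral_cmult_indicator) (simp add: B_def borel_open open_Times)
  moreover have "emeasure lborel B = ennreal (P * (unit_ball_vol (CARD('n)) * (L/2) ^ CARD('n)))"
    unfolding B_def using P h by (intro box_measure) (auto simp: L_def)
  moreover have "ennreal (1 / (2*P)) * ennreal (P * (unit_ball_vol (CARD('n)) * (L/2) ^ CARD('n)))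
      = ennreal (unit_ball_vol (CARD('n)) * (h/2) ^ CARD('n) * P2 j ^ CARD('n) / 2)"
  proof -
    have "ennreal (1 / (2*P)) * ennreal (P * (unit_ball_vol (CARD('n)) * (L/2) ^ CARD('n)))
       = ennreal (1 / (2*P) * (P * (unit_ball_vol (CARD('n)) * (L/2) ^ CARD('n))))"
      using P h by (subst ennreal_mult) (auto simp: L_def)
    also have "1 / (2*P) * (P * (unit_ball_vol (CARD('n)) * (L/2) ^ CARD('n))) = unit_ball_vol (CARD('n)) * (h/2) ^ CARD('n) * P2 j ^ CARD('n) / 2"
      using P by (simp add: L_def P_def power_mult_distrib field_simps)
    finally show ?thesis .
  qed
  ultimately show ?thesis by simp
qed


lemma cube_alg:
  fixes P p Wb :: real and n :: nat
  assumes P: "P > 0" and p: "p > 0" and Wb: "Wb > 0"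
  shows "(3 * Wb * (2*P)^n) powr (p/2) * (4/3 * P) powr (-(real n * (1/2 - 1/p)) * p)
    = (3 * Wb * 2^n) powr (p/2) * (4/3) powr (-(real n * (1/2 - 1/p)) * p) * P ^ n"
proof -
  have a: "(3 * Wb * (2*P)^n) powr (p/2) = (3 * Wb * 2^n) powr (p/2) * P powr (real n * (p/2))"
    using P Wb by (simp add: power_mult_distrib powr_mult powr_realpow[symmetric] powr_powr mult.assoc)
  have b: "(4/3 * P) powr (-(real n * (1/2 - 1/p)) * p) = (4/3) powr (-(real n * (1/2 - 1/p)) * p) * P powr (-(real n * (1/2 - 1/p)) * p)"
    using P powr_mult[of "4/3" P] by simp
  have c: "P powr (real n * (p/2)) * P powr (-(real n * (1/2 - 1/p)) * p) = P ^ n"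
  proof -
    have "real n * (p/2) + (-(real n * (1/2 - 1/p)) * p) = real n" using p by (simp add: field_simps)
    then show ?thesis using P by (simp add: powr_add[symmetric] powr_realpow)
  qed
  show ?thesis unfolding a b using c by (simp add: ac_simps)
qed

lemma fst_meas_borel[measurable]: "(fst :: real \<times> 'a::euclidean_space \<Rightarrow> real) \<in> borel_measurable borel"
  by (simp add: borel_measurable_continuous_onI continuous_on_fst)

definition Kpc :: "real \<Rightarrow> real \<Rightarrow> nat \<Rightarrow> real" where
  "Kpc p h n = (3 * unit_ball_vol n * 2^n) powr (p/2) * (4/3) powr (-(real n * (1/2 - 1/p)) * p)
        / (unit_ball_vol n * (h/2) ^ n / 2)"

lemma Kpc_pos: "h > 0 \<Longrightarrow> Kpc p h n > 0"
proof -
  assume h: "h > 0"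
  have u: "unit_ball_vol (real n) > 0" by simp
  have u': "unit_ball_vol (real n) \<noteq> 0" using u by linarith
  have 1: "(3 * unit_ball_vol (real n) * 2^n) powr (p/2) > 0" using u' by simp
  have 2: "(4/3::real) powr (-(real n * (1/2 - 1/p)) * p) > 0" by simp
  have 3: "unit_ball_vol (real n) * (h/2)^n / 2 > 0" using u h by simp
  show ?thesis unfolding Kpc_def using 1 2 3 by simp
qed

locale cubes =
  fixes f :: "real \<times> (real^'n::finite) \<Rightarrow> complex^'N::finite"
    and s p h :: real
  assumes fm: "f \<in> borel_measurable lborel"
    and p: "0 < p" "p \<le> 1" and h: "h > 0" "h * real CARD('n) < 1"
begin

declare fm[measurable]

definition Gq :: "int \<times> ('n \<Rightarrow> int) \<Rightarrow> ennreal" where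
  "Gq q = (\<integral>\<^sup>+ w \<in> Qc h q. ennreal ((norm (kappa (-s) f w))\<^sup>2) * ennreal (1 / fst w) \<partial>lborel)"

definition Lq :: "int \<times> ('n \<Rightarrow> int) \<Rightarrow> ennreal" where
  "Lq q = epowr (Gq q) (1/2) * ennreal (fst (ctr h q) powr (-(real CARD('n) * (1/2 - 1/p))))"

definition Jq :: "int \<times> ('n \<Rightarrow> int) \<Rightarrow> ennreal" where
  "Jq q = (\<integral>\<^sup>+ z \<in> Qc h q. epowr (whitney_avg (1,2) (kappa (-s) f) z) p * ennreal (1 / fst z) \<partial>lborel)"

lemma G_bound:
  assumes z: "z \<in> Qc h (j, v)"
  shows "Gq (j, v) \<le> ennreal (3 * unit_ball_vol (CARD('n)) * (2 * P2 j)^CARD('n)) * epowr (whitney_avg (1,2) (kappa (-s) f) z) 2"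
proof -
  define P where "P = P2 j"
  define Wb where "Wb = unit_ball_vol (CARD('n))"
  have Wb: "Wb > 0" by (simp add: Wb_def)
  have P: "P > 0" by (simp add: P_def)
  have Z: "P \<le> fst z" "fst z < 2 * P" using z Qc_char[OF h(1), of z j v] by (auto simp: P_def)
  let ?F = "\<lambda>w. ennreal ((norm (kappa (-s) f w))\<^sup>2)"
  define N where "N = (\<integral>\<^sup>+ w \<in> whitney_region (1,2) z. ?F w \<partial>lborel)"
  define d where "d = (2 * fst z - fst z / 2) * (Wb * (1 * fst z) ^ CARD('n))"
  have D: "emeasure lborel (whitney_region (1,2) z) = ennreal d"
    unfolding d_def Wb_def using region_measure[of "(1::real,2::real)" z] Z P by simp
  have dpos: "d > 0" using Z P Wb by (simp add: d_def)
  have dle: "d \<le> P * (3 * Wb * (2 * P)^CARD('n))"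
  proof -
    have "d = (3/2) * fst z * (Wb * fst z ^ CARD('n))" by (simp add: d_def)
    also have "\<dots> \<le> (3/2) * (2*P) * (Wb * (2*P) ^ CARD('n))"
      using Z P Wb by (intro mult_mono power_mono mult_left_mono) auto
    also have "\<dots> = P * (3 * Wb * (2 * P)^CARD('n))" by simp
    finally show ?thesis .
  qed
  have "Gq (j, v) \<le> (\<integral>\<^sup>+ w. ?F w * ennreal (1 / P) * indicator (whitney_region (1,2) z) w \<partial>lborel)"
    unfolding Gq_def
  proof (intro nn_integral_mono)
    fix w
    show "?F w * ennreal (1 / fst w) * indicator (Qc h (j, v)) w \<le> ?F w * ennreal (1 / P) * indicator (whitney_region (1,2) z) w"
    proof (cases "w \<in> Qc h (j, v)")
      case True
      then have "P \<le> fst w" using Qc_char[OF h(1), of w j v] by (auto simp: P_def)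
      then have "1 / fst w \<le> 1 / P" using P by (intro divide_left_mono) auto
      moreover have "w \<in> whitney_region (1,2) z" using Qc_in_avg[OF h z True] .
      ultimately show ?thesis using True by (auto intro!: mult_left_mono ennreal_leI)
    qed simp
  qed
  also have "\<dots> = ennreal (1 / P) * N"
    unfolding N_def by (subst nn_integral_cmult[symmetric]) (measurable, auto intro!: nn_integral_cong simp: ac_simps)
  also have "N = (N / ennreal d) * ennreal d"
    using dpos by (simp add: ennreal_divide_times)
  also have "\<dots> \<le> (N / ennreal d) * ennreal (P * (3 * Wb * (2 * P)^CARD('n)))"
    using dle by (intro mult_left_mono ennreal_leI) auto
  also have "N / ennreal d = epowr (whitney_avg (1,2) (kappa (-s) f) z) 2"
    unfolding whitney_avg_def D[symmetric] N_def by (simp add: epowr_epowr)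
  finally have "Gq (j, v) \<le> ennreal (1 / P) * (epowr (whitney_avg (1,2) (kappa (-s) f) z) 2 * ennreal (P * (3 * Wb * (2 * P)^CARD('n))))"
    by (simp add: mult_left_mono)
  also have "\<dots> = (ennreal (1 / P) * ennreal (P * (3 * Wb * (2 * P)^CARD('n)))) * epowr (whitney_avg (1,2) (kappa (-s) f) z) 2"
    by (simp only: ac_simps)
  also have "ennreal (1 / P) * ennreal (P * (3 * Wb * (2 * P)^CARD('n))) = ennreal (1 / P * (P * (3 * Wb * (2 * P)^CARD('n))))"
    using P Wb by (intro ennreal_mult[symmetric]) auto
  also have "1 / P * (P * (3 * Wb * (2 * P)^CARD('n))) = 3 * Wb * (2 * P)^CARD('n)" using P by simp
  finally show ?thesis by (simp add: Wb_def P_def)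
qed

lemma L_bound: "epowr (Lq (j, v)) p \<le> ennreal (Kpc p h CARD('n)) * Jq (j, v)"
proof -
  define P where "P = P2 j"
  define n where "n = CARD('n)"
  define Wb where "Wb = unit_ball_vol (real n)"
  define e where "e = real n * (1/2 - 1/p)"
  define g where "g = (3 * Wb * 2^n) powr (p/2) * (4/3) powr (-e * p)"
  define al where "al = Wb * (h/2) ^ n / 2"
  have P: "P > 0" by (simp add: P_def)
  have Qm[measurable]: "Qc h (j, v) \<in> sets lborel" using Qc_sets[OF h(1)] .
  have Wb: "Wb > 0" by (simp add: Wb_def)
  have g: "g > 0" using Wb by (simp add: g_def)
  have al: "al > 0" using Wb h by (simp add: al_def)
  have T: "fst (ctr h (j, v)) = 4/3 * P" by (simp add: ctr_def P_def)
  let ?W = "\<lambda>z. whitney_avg (1,2) (kappa (-s) f) z"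
  have pw: "epowr (Lq (j, v)) p \<le> ennreal (g * P^n) * epowr (?W z) p" if z: "z \<in> Qc h (j, v)" for z
  proof -
    have "epowr (Lq (j, v)) p = epowr (epowr (Gq (j, v)) (1/2)) p * epowr (ennreal ((4/3 * P) powr (-e))) p"
      unfolding Lq_def T e_def n_def using p by (simp add: epowr_mult)
    also have "\<dots> = epowr (Gq (j, v)) (p/2) * ennreal ((4/3 * P) powr (-e * p))"
      using P by (simp add: epowr_epowr epowr_ennreal powr_powr)
    also have "epowr (Gq (j, v)) (p/2) \<le> epowr (ennreal (3 * Wb * (2 * P)^n) * epowr (?W z) 2) (p/2)"
      using G_bound[OF z] p by (intro epowr_mono) (auto simp: Wb_def P_def n_def)
    also have "\<dots> = ennreal ((3 * Wb * (2 * P)^n) powr (p/2)) * epowr (?W z) p"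
      using p Wb P by (simp add: epowr_mult epowr_ennreal epowr_epowr)
    finally have "epowr (Lq (j, v)) p \<le> ennreal ((3 * Wb * (2 * P)^n) powr (p/2)) * epowr (?W z) p * ennreal ((4/3 * P) powr (-e * p))"
      by (simp add: mult_right_mono)
    also have "\<dots> = ennreal ((3 * Wb * (2 * P)^n) powr (p/2) * (4/3 * P) powr (-e * p)) * epowr (?W z) p"
      by (simp add: ennreal_mult ac_simps)
    also have "(3 * Wb * (2 * P)^n) powr (p/2) * (4/3 * P) powr (-e * p) = g * P^n"
      unfolding g_def e_def using cube_alg[OF P p(1) Wb, of n] by simp
    finally show ?thesis .
  qed
  define M where "M = (\<integral>\<^sup>+ z \<in> Qc h (j, v). ennreal (1 / fst z) \<partial>lborel)"
  have M: "ennreal (al * P^n) \<le> M"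
    unfolding M_def al_def Wb_def n_def P_def using Qc_lower[OF h(1), of j v] by (simp add: mult_ac)
  have mm: "(\<lambda>z. ennreal (1 / fst z) * indicator (Qc h (j, v)) z) \<in> borel_measurable lborel" by measurable
  have mm2: "(\<lambda>z. epowr (?W z) p * ennreal (1 / fst z) * indicator (Qc h (j, v)) z) \<in> borel_measurable lborel" by measurable
  have "epowr (Lq (j, v)) p * M = (\<integral>\<^sup>+ z. epowr (Lq (j, v)) p * (ennreal (1 / fst z) * indicator (Qc h (j, v)) z) \<partial>lborel)"
    unfolding M_def by (rule nn_integral_cmult[OF mm, symmetric])
  also have "\<dots> \<le> (\<integral>\<^sup>+ z. ennreal (g * P^n) * (epowr (?W z) p * ennreal (1 / fst z) * indicator (Qc h (j, v)) z) \<partial>lborel)"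
  proof (intro nn_integral_mono)
    fix z
    show "epowr (Lq (j, v)) p * (ennreal (1 / fst z) * indicator (Qc h (j, v)) z)
        \<le> ennreal (g * P^n) * (epowr (?W z) p * ennreal (1 / fst z) * indicator (Qc h (j, v)) z)"
    proof (cases "z \<in> Qc h (j, v)")
      case True
      then show ?thesis using pw[OF True] by (simp add: mult_right_mono mult.assoc[symmetric])
    qed simp
  qed
  also have "\<dots> = ennreal (g * P^n) * Jq (j, v)"
    unfolding Jq_def by (rule nn_integral_cmult[OF mm2])
  finally have I: "epowr (Lq (j, v)) p * M \<le> ennreal (g * P^n) * Jq (j, v)" .
  have "epowr (Lq (j, v)) p = epowr (Lq (j, v)) p * (ennreal (al * P^n) * ennreal (1 / (al * P^n)))"
  proof -
    have "ennreal (al * P^n) * ennreal (1 / (al * P^n)) = ennreal ((al * P^n) * (1 / (al * P^n)))"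
      using al P by (subst ennreal_mult) auto
    also have "\<dots> = 1" using al P by simp
    finally show ?thesis by simp
  qed
  also have "\<dots> = (epowr (Lq (j, v)) p * ennreal (al * P^n)) * ennreal (1 / (al * P^n))"
    by (simp add: mult.assoc)
  also have "\<dots> \<le> (epowr (Lq (j, v)) p * M) * ennreal (1 / (al * P^n))"
    using M by (intro mult_right_mono mult_left_mono) auto
  also have "\<dots> \<le> (ennreal (g * P^n) * Jq (j, v)) * ennreal (1 / (al * P^n))"
    using I by (rule mult_right_mono) simp
  also have "\<dots> = (ennreal (g * P^n) * ennreal (1 / (al * P^n))) * Jq (j, v)"
    by (simp add: ac_simps)
  also have "ennreal (g * P^n) * ennreal (1 / (al * P^n)) = ennreal (g * P^n * (1 / (al * P^n)))"
    using g al P by (subst ennreal_mult) auto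
  also have "g * P^n * (1 / (al * P^n)) = Kpc p h CARD('n)"
    unfolding Kpc_def g_def al_def e_def Wb_def n_def using P by simp
  finally show ?thesis .
qed

end


context cubes
begin

definition qk :: "nat \<Rightarrow> int \<times> ('n \<Rightarrow> int)" where "qk k = from_nat k"
definition valid :: "nat \<Rightarrow> bool" where "valid k \<longleftrightarrow> to_nat (qk k) = k"
definition Pk :: "nat \<Rightarrow> (real \<times> (real^'n)) set" where
  "Pk k = (if valid k then Qc h (qk k) else {})"

lemma valid_to_nat: "valid (to_nat (q :: int \<times> ('n \<Rightarrow> int)))"
  by (simp add: valid_def qk_def)

lemma qk_to_nat: "qk (to_nat (q :: int \<times> ('n \<Rightarrow> int))) = q"
  by (simp add: qk_def)

lemma Pk_sets[measurable]: "Pk k \<in> sets lborel"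
  unfolding Pk_def using Qc_sets[OF h(1), of "qk k"] by auto

lemma Pk_disj: "disjoint_family Pk"
  unfolding disjoint_family_on_def
proof (intro ballI impI)
  fix k l :: nat assume "k \<noteq> l"
  show "Pk k \<inter> Pk l = {}"
  proof (cases "valid k \<and> valid l")
    case True
    then have "qk k \<noteq> qk l" using \<open>k \<noteq> l\<close> unfolding valid_def by metis
    then show ?thesis using True by (simp add: Pk_def Qc_disj)
  qed (auto simp: Pk_def)
qed

lemma Pk_cover: "fst w > 0 \<Longrightarrow> w \<in> Pk (to_nat (idx h w))"
  by (simp add: Pk_def valid_to_nat qk_to_nat Qc_cover)

lemma Pk_pos: "w \<in> Pk k \<Longrightarrow> fst w > 0"
  by (auto simp: Pk_def Qc_pos split: if_splits)

lemma Pk_union: "(\<Union>k. Pk k) = {z. fst z > 0}"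
  using Pk_cover Pk_pos by blast

abbreviation "Wf z \<equiv> whitney_avg (1,2) (kappa (-s) f) z"

lemma Zint_split: "Zint p s f = (\<Sum>k. \<integral>\<^sup>+ z \<in> Pk k. epowr (Wf z) p * ennreal (1 / fst z) \<partial>lborel)"
proof -
  have "Zint p s f = (\<integral>\<^sup>+ z. (\<Sum>k. epowr (Wf z) p * ennreal (1 / fst z) * indicator (Pk k) z) \<partial>lborel)"
    unfolding Zint_def
  proof (intro nn_integral_cong)
    fix z
    have "(\<Sum>k. epowr (Wf z) p * ennreal (1 / fst z) * indicator (Pk k) z) = epowr (Wf z) p * ennreal (1 / fst z) * (\<Sum>k. indicator (Pk k) z)"
      by (simp add: ennreal_suminf_cmult mult.assoc)
    also have "(\<Sum>k. indicator (Pk k) z :: ennreal) = indicator {z. fst z > 0} z"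
      using suminf_indicator[OF Pk_disj, of z] by (simp add: Pk_union)
    finally show "epowr (Wf z) p * ennreal (1 / fst z) * indicator {z. fst z > 0} z = (\<Sum>k. epowr (Wf z) p * ennreal (1 / fst z) * indicator (Pk k) z)"
      by simp
  qed
  also have "\<dots> = (\<Sum>k. \<integral>\<^sup>+ z \<in> Pk k. epowr (Wf z) p * ennreal (1 / fst z) \<partial>lborel)"
    by (rule nn_integral_suminf) measurable
  finally show ?thesis .
qed

lemma Jq_le: "valid k \<Longrightarrow> Jq (qk k) = (\<integral>\<^sup>+ z \<in> Pk k. epowr (Wf z) p * ennreal (1 / fst z) \<partial>lborel)"
  by (simp add: Jq_def Pk_def)


lemma term_le_suminf_enn: "(g k :: ennreal) \<le> (\<Sum>k. g k)"
  using sum_le_suminf[of g "{k}"] by auto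

definition lamr :: "nat \<Rightarrow> real" where
  "lamr k = (if valid k then enn2real (Lq (qk k)) else 0)"

definition lam :: "nat \<Rightarrow> complex" where
  "lam k = complex_of_real (lamr k)"

lemma lamr_nonneg: "lamr k \<ge> 0"
  by (simp add: lamr_def)

lemma norm_lam: "norm (lam k) = lamr k"
  using lamr_nonneg[of k] by (simp add: lam_def)

lemma J_le_Zint: "(\<integral>\<^sup>+ z \<in> Pk k. epowr (Wf z) p * ennreal (1 / fst z) \<partial>lborel) \<le> Zint p s f"
  unfolding Zint_split by (rule term_le_suminf_enn)

lemma Lq_fin:
  assumes Z: "Zint p s f < top" and v: "valid k"
  shows "Lq (qk k) < top"
proof -
  obtain j w where q: "qk k = (j, w)" by (cases "qk k")
  have "epowr (Lq (qk k)) p \<le> ennreal (Kpc p h CARD('n)) * Jq (qk k)"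
    unfolding q by (rule L_bound)
  also have "Jq (qk k) \<le> Zint p s f" using J_le_Zint[of k] v by (simp add: Jq_le)
  finally have "epowr (Lq (qk k)) p \<le> ennreal (Kpc p h CARD('n)) * Zint p s f"
    by (simp add: mult_left_mono)
  also have "\<dots> < top" using Z by (simp add: ennreal_mult_less_top)
  finally show ?thesis by simp
qed

lemma lam_p_bound:
  assumes Z: "Zint p s f < top"
  shows "ennreal (norm (lam k) powr p) \<le> ennreal (Kpc p h CARD('n)) * (\<integral>\<^sup>+ z \<in> Pk k. epowr (Wf z) p * ennreal (1 / fst z) \<partial>lborel)"
proof (cases "valid k")
  case True
  obtain j w where q: "qk k = (j, w)" by (cases "qk k")
  have L: "Lq (qk k) \<noteq> top" using Lq_fin[OF Z True] by simp
  have "ennreal (norm (lam k) powr p) = epowr (Lq (qk k)) p"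
    using L True by (simp add: norm_lam lamr_def epowr_def)
  also have "\<dots> \<le> ennreal (Kpc p h CARD('n)) * Jq (qk k)"
    unfolding q by (rule L_bound)
  finally show ?thesis using True by (simp add: Jq_le)
next
  case False
  then show ?thesis by (simp add: norm_lam lamr_def)
qed

lemma lp_bound:
  assumes Z: "Zint p s f < top"
  shows "lp_sum p lam \<le> ennreal (Kpc p h CARD('n)) * Zint p s f"
proof -
  have "lp_sum p lam \<le> (\<Sum>k. ennreal (Kpc p h CARD('n)) * (\<integral>\<^sup>+ z \<in> Pk k. epowr (Wf z) p * ennreal (1 / fst z) \<partial>lborel))"
    unfolding lp_sum_def by (intro suminf_le lam_p_bound[OF Z]) auto
  also have "\<dots> = ennreal (Kpc p h CARD('n)) * Zint p s f"
    unfolding Zint_split by (rule ennreal_suminf_cmult)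
  finally show ?thesis .
qed


definition ak :: "nat \<Rightarrow> real \<times> (real^'n) \<Rightarrow> complex^'N" where
  "ak k = (\<lambda>w. if w \<in> Pk k \<and> lamr k \<noteq> 0 then complex_of_real (1 / lamr k) *s f w else 0)"

lemma ak_meas[measurable]: "ak k \<in> borel_measurable lborel"
  unfolding ak_def by measurable

lemma Pk_sub: "Pk k \<subseteq> Qc h (qk k)"
  by (auto simp: Pk_def)

lemma ak_atom:
  assumes Z: "Zint p s f < top" and wp: "whitney_param c" and hc: "h * real CARD('n) < fst c"
  shows "Zp_atom_at p s c (ctr h (qk k)) (ak k)"
proof -
  have sub: "Pk k \<subseteq> whitney_region c (ctr h (qk k))"
    using Pk_sub Qc_in_region[OF wp h(1) hc] by blast
  have ae: "AE w in lborel. w \<notin> whitney_region c (ctr h (qk k)) \<longrightarrow> ak k w = 0"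
    using sub by (auto simp: ak_def)
  define T where "T = fst (ctr h (qk k))"
  define e where "e = real CARD('n) * (1/2 - 1/p)"
  have Tpos: "T > 0" by (simp add: T_def ctr_def)
  let ?I = "\<integral>\<^sup>+ w \<in> whitney_region c (ctr h (qk k)). ennreal ((norm (kappa (-s) (ak k) w))\<^sup>2) * ennreal (1 / fst w) \<partial>lborel"
  have bnd: "epowr ?I (1/2) \<le> ennreal (T powr e)"
  proof (cases "valid k \<and> lamr k \<noteq> 0")
    case False
    then have "ak k = (\<lambda>w. 0)" by (auto simp: ak_def Pk_def)
    then show ?thesis by (simp add: kappa_def)
  next
    case True
    then have v: "valid k" and l0: "lamr k \<noteq> 0" by auto
    define q where "q = qk k"
    have L: "Lq q \<noteq> top" using Lq_fin[OF Z v] by (simp add: q_def)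
    have TeP: "T powr (-e) > 0" using Tpos by simp
    have G: "Gq q \<noteq> top"
    proof
      assume "Gq q = top"
      then have "Lq q = top * ennreal (T powr (-e))" by (simp add: Lq_def T_def e_def q_def)
      then show False using L TeP by (simp add: ennreal_top_mult)
    qed
    then obtain g where g: "Gq q = ennreal g" "g \<ge> 0" by (cases "Gq q") auto
    have Lv: "Lq q = ennreal (sqrt g * T powr (-e))"
      unfolding Lq_def using g by (simp add: epowr_ennreal powr_half_sqrt ennreal_mult T_def e_def q_def)
    have lr: "lamr k = sqrt g * T powr (-e)"
      using v Lv g by (simp add: lamr_def q_def)
    have gpos: "g > 0" using l0 lr g by (cases "g = 0") auto
    have "?I = (\<integral>\<^sup>+ w. ennreal ((1 / lamr k)\<^sup>2) * (ennreal ((norm (kappa (-s) f w))\<^sup>2) * ennreal (1 / fst w) * indicator (Qc h q) w) \<partial>lborel)"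
    proof (intro nn_integral_cong)
      fix w
      show "ennreal ((norm (kappa (-s) (ak k) w))\<^sup>2) * ennreal (1 / fst w) * indicator (whitney_region c (ctr h (qk k))) w
          = ennreal ((1 / lamr k)\<^sup>2) * (ennreal ((norm (kappa (-s) f w))\<^sup>2) * ennreal (1 / fst w) * indicator (Qc h q) w)"
      proof (cases "w \<in> Qc h q")
        case True
        then have "w \<in> Pk k" using v by (simp add: Pk_def q_def)
        then have wr: "w \<in> whitney_region c (ctr h (qk k))" using sub by auto
        have nrm: "norm (kappa (-s) (ak k) w) = (1 / lamr k) * norm (kappa (-s) f w)"
          using \<open>w \<in> Pk k\<close> l0 lamr_nonneg[of k]
          by (simp add: ak_def kappa_def norm_smult_vec norm_divide)
        have r: "(norm (kappa (-s) (ak k) w))^2 = (1/lamr k)^2 * (norm (kappa (-s) f w))^2"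
          by (simp only: nrm power_mult_distrib)
        have "ennreal ((norm (kappa (-s) (ak k) w))^2) = ennreal ((1/lamr k)^2) * ennreal ((norm (kappa (-s) f w))^2)"
          by (simp only: r ennreal_mult[OF zero_le_power2 zero_le_power2])
        then show ?thesis using True wr by (simp add: mult.assoc)
      next
        case False
        then have "w \<notin> Pk k" using v by (simp add: Pk_def q_def)
        then show ?thesis using False by (simp add: ak_def kappa_def)
      qed
    qed
    also have "\<dots> = ennreal ((1 / lamr k)\<^sup>2) * Gq q"
      unfolding Gq_def using Qc_sets[OF h(1), of q] by (subst nn_integral_cmult) (auto simp: mult.assoc)
    also have "\<dots> = ennreal ((1 / lamr k)\<^sup>2 * g)" using g by (simp add: ennreal_mult)
    finally have I: "?I = ennreal ((1 / lamr k)\<^sup>2 * g)" .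
    have "epowr ?I (1/2) = ennreal (sqrt ((1 / lamr k)\<^sup>2 * g))"
      unfolding I using g by (simp add: epowr_ennreal powr_half_sqrt)
    also have "sqrt ((1 / lamr k)\<^sup>2 * g) = sqrt g / lamr k"
      using lamr_nonneg[of k] g by (simp add: real_sqrt_mult)
    also have "\<dots> = T powr e"
      using lr gpos Tpos l0 by (simp add: powr_minus field_simps)
    finally show ?thesis by simp
  qed
  show ?thesis unfolding Zp_atom_at_def
    using ae bnd by (simp add: T_def e_def ctr_def)
qed

end


context cubes
begin

definition Bm :: "nat \<Rightarrow> (real \<times> (real^'n)) set" where "Bm m = (\<Union>k<m. Pk k)"
definition fB :: "nat \<Rightarrow> real \<times> (real^'n) \<Rightarrow> complex^'N" where
  "fB m = (\<lambda>w. if w \<in> Bm m then 0 else f w)"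

lemma Bm_sets[measurable]: "Bm m \<in> sets lborel"
  unfolding Bm_def by measurable

lemma fB_meas[measurable]: "fB m \<in> borel_measurable lborel"
  unfolding fB_def by measurable

lemma term_eq: "lam k *s ak k w = (if w \<in> Pk k \<and> lamr k \<noteq> 0 then f w else 0)"
proof (cases "w \<in> Pk k \<and> lamr k \<noteq> 0")
  case True
  have "lam k * complex_of_real (1 / lamr k) = 1" using True by (simp add: lam_def of_real_mult[symmetric])
  then show ?thesis using True by (simp add: ak_def vector_smult_assoc)
qed (auto simp: ak_def)

lemma sum_disj:
  "(\<Sum>k<m. lam k *s ak k w) = (if \<exists>k<m. w \<in> Pk k \<and> lamr k \<noteq> 0 then f w else 0)"
proof (cases "\<exists>k<m. w \<in> Pk k \<and> lamr k \<noteq> 0")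
  case True
  then obtain k0 where k0: "k0 < m" "w \<in> Pk k0" "lamr k0 \<noteq> 0" by auto
  have oth: "lam k *s ak k w = 0" if "k \<noteq> k0" for k
  proof -
    have "w \<notin> Pk k" using Pk_disj k0(2) that unfolding disjoint_family_on_def by blast
    then show ?thesis by (simp add: term_eq)
  qed
  have "(\<Sum>k<m. lam k *s ak k w) = lam k0 *s ak k0 w + (\<Sum>k\<in>{..<m} - {k0}. lam k *s ak k w)"
    using k0(1) by (subst sum.remove[of _ k0]) auto
  also have "(\<Sum>k\<in>{..<m} - {k0}. lam k *s ak k w) = 0" using oth by (intro sum.neutral) auto
  finally show ?thesis using True k0 by (simp add: term_eq)
next
  case False
  then have "\<forall>k\<in>{..<m}. lam k *s ak k w = 0" by (auto simp: term_eq)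
  then have "(\<Sum>k<m. lam k *s ak k w) = 0" by (rule sum.neutral)
  then show ?thesis by (subst if_not_P[OF False]) simp
qed

lemma AE_null:
  assumes Z: "Zint p s f < top"
  shows "AE w in lborel. \<forall>k. w \<in> Pk k \<and> lamr k = 0 \<longrightarrow> f w = 0"
proof (subst AE_all_countable, intro allI)
  fix k
  show "AE w in lborel. w \<in> Pk k \<and> lamr k = 0 \<longrightarrow> f w = 0"
  proof (cases "valid k \<and> lamr k = 0")
    case False
    then show ?thesis by (auto simp: Pk_def)
  next
    case True
    then have v: "valid k" and l0: "lamr k = 0" by auto
    define q where "q = qk k"
    have L: "Lq q \<noteq> top" using Lq_fin[OF Z v] by (simp add: q_def)
    have L0: "Lq q = 0" using l0 v L by (simp add: lamr_def q_def enn2real_eq_0_iff)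
    have TeP: "fst (ctr h q) powr (-(real CARD('n) * (1/2 - 1/p))) > 0"
    proof -
      have "P2 (fst q) \<noteq> 0" using P2_pos[of "fst q"] by linarith
      then show ?thesis by (simp add: ctr_def)
    qed
    have G0: "Gq q = 0"
    proof (cases "Gq q")
      case (real g)
      then have "ennreal (g powr (1/2)) * ennreal (fst (ctr h q) powr (-(real CARD('n) * (1/2 - 1/p)))) = 0"
        using L0 by (simp add: Lq_def epowr_ennreal)
      then have le: "g powr (1/2) * fst (ctr h q) powr (-(real CARD('n) * (1/2 - 1/p))) \<le> 0"
        using real by (simp add: ennreal_mult[symmetric] ennreal_eq_0_iff)
      have x0: "g powr (1/2) \<ge> 0" by simp
      have "g powr (1/2) = 0"
      proof (rule ccontr)
        assume "g powr (1/2) \<noteq> 0"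
        then have "g powr (1/2) > 0" using x0 by linarith
        then have "g powr (1/2) * fst (ctr h q) powr (-(real CARD('n) * (1/2 - 1/p))) > 0"
          using TeP by (rule mult_pos_pos)
        then show False using le by linarith
      qed
      then show ?thesis using real by simp
    next
      case top
      then show ?thesis using L TeP by (simp add: Lq_def ennreal_top_mult)
    qed
    have Qm[measurable]: "Qc h q \<in> sets lborel" using Qc_sets[OF h(1)] .
    have "AE w in lborel. ennreal ((norm (kappa (-s) f w))\<^sup>2) * ennreal (1 / fst w) * indicator (Qc h q) w = 0"
      using G0 unfolding Gq_def by (subst nn_integral_0_iff_AE[symmetric]) measurable
    then show ?thesis
    proof eventually_elim
      case (elim w)
      show ?case
      proof
        assume "w \<in> Pk k \<and> lamr k = 0"
        then have wq: "w \<in> Qc h q" using v by (simp add: Pk_def q_def)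
        then have t: "fst w > 0" by (rule Qc_pos)
        then have "ennreal ((norm (kappa (-s) f w))\<^sup>2) = 0" using elim wq by (simp add: mult_eq_0_iff)
        then have "kappa (-s) f w = 0" by simp
        then show "f w = 0" using t by (simp add: kappa_def)
      qed
    qed
  qed
qed

lemma diff_AE:
  assumes Z: "Zint p s f < top"
  shows "AE w in lborel. f w - (\<Sum>k<m. lam k *s ak k w) = fB m w"
  using AE_null[OF Z]
proof eventually_elim
  case (elim w)
  show ?case
  proof (cases "w \<in> Bm m")
    case True
    then obtain k0 where k0: "k0 < m" "w \<in> Pk k0" by (auto simp: Bm_def)
    show ?thesis
    proof (cases "lamr k0 = 0")
      case True
      then have fw: "f w = 0" using elim k0 by auto
      then show ?thesis using \<open>w \<in> Bm m\<close> by (simp add: sum_disj fB_def)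
    next
      case False
      then show ?thesis using k0 \<open>w \<in> Bm m\<close> by (auto simp: sum_disj fB_def)
    qed
  next
    case False
    then have "\<not> (\<exists>k<m. w \<in> Pk k \<and> lamr k \<noteq> 0)" by (auto simp: Bm_def)
    then show ?thesis using False by (auto simp: sum_disj fB_def)
  qed
qed

lemma Zint_diff_eq:
  assumes Z: "Zint p s f < top"
  shows "Zint p s (\<lambda>w. f w - (\<Sum>k<m. lam k *s ak k w)) = Zint p s (fB m)"
proof -
  have "whitney_avg (1,2) (kappa (-s) (\<lambda>w. f w - (\<Sum>k<m. lam k *s ak k w))) z = whitney_avg (1,2) (kappa (-s) (fB m)) z" for z
  proof (rule avg_congAE)
    show "AE w in lborel. w \<in> whitney_region (1,2) z \<longrightarrow> norm (kappa (-s) (\<lambda>w. f w - (\<Sum>k<m. lam k *s ak k w)) w) = norm (kappa (-s) (fB m) w)"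
      using diff_AE[OF Z, of m] by eventually_elim (simp add: kappa_def)
  qed
  then show ?thesis unfolding Zint_def by simp
qed

end


context cubes
begin

lemma fB0: "fB 0 = f"
  by (simp add: fB_def Bm_def)

lemma Bm_mono: "Bm m \<subseteq> Bm (Suc m)"
  unfolding Bm_def by (intro UN_mono) auto

lemma fB_norm_mono: "norm (kappa (-s) (fB (Suc m)) w) \<le> norm (kappa (-s) (fB m) w)"
  using Bm_mono[of m] by (auto simp: fB_def kappa_def)

lemma fB_eventually0:
  assumes "fst w > 0"
  shows "fB (Suc (to_nat (idx h w))) w = 0"
proof -
  have "w \<in> Bm (Suc (to_nat (idx h w)))" using Pk_cover[OF assms] by (auto simp: Bm_def)
  then show ?thesis by (simp add: fB_def)
qed

lemma fB_conv:
  assumes Z: "Zint p s f < top"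
  shows "(\<lambda>m. Zint p s (fB m)) \<longlonglongrightarrow> 0"
proof -
  define g where "g m z = epowr (whitney_avg (1,2) (kappa (-s) (fB m)) z) p * ennreal (1/fst z) * indicator {z. 0 < fst z} z" for m z
  have Zg: "Zint p s (fB m) = (\<integral>\<^sup>+ z. g m z \<partial>lborel)" for m
    by (simp add: Zint_def g_def)
  have gm[measurable]: "g m \<in> borel_measurable lborel" for m
    unfolding g_def by measurable
  have gmono: "g (Suc m) z \<le> g m z" for m z
    unfolding g_def using p
    by (intro mult_right_mono epowr_mono avg_mono fB_norm_mono) auto
  have gdec: "decseq (\<lambda>m. g m z)" for z
    using gmono by (intro decseq_SucI)
  have g0: "(\<integral>\<^sup>+ z. g 0 z \<partial>lborel) < \<infinity>" using Z Zg[of 0] by (simp add: fB0)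
  have fin: "AE z in lborel. g 0 z \<noteq> \<infinity>"
    by (rule nn_integral_PInf_AE) (use g0 in auto)
  have INF0: "AE z in lborel. (INF m. g m z) = 0"
    using fin
  proof eventually_elim
    case (elim z)
    show ?case
    proof (cases "fst z > 0")
      case False
      then show ?thesis by (simp add: g_def)
    next
      case t: True
      define D where "D = emeasure lborel (whitney_region (1,2) z)"
      define d where "d = (2 * fst z - fst z / 2) * (unit_ball_vol (CARD('n)) * (1 * fst z) ^ CARD('n))"
      have D: "D = ennreal d" unfolding D_def d_def using region_measure[of "(1::real,2::real)" z] t by simp
      have dpos: "d > 0" using t by (simp add: d_def)
      define N where "N m = (\<integral>\<^sup>+ w \<in> whitney_region (1,2) z. ennreal ((norm (kappa (-s) (fB m) w))\<^sup>2) \<partial>lborel)" for m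
      have WN: "whitney_avg (1,2) (kappa (-s) (fB m)) z = epowr (N m / D) (1/2)" for m
        by (simp add: whitney_avg_def N_def D_def)
      have gN: "g m z = epowr (N m / D) (p/2) * ennreal (1 / fst z)" for m
        using t p by (simp add: g_def WN epowr_epowr)
      have "N 0 \<noteq> top"
      proof
        assume "N 0 = top"
        have tt: "top / ennreal d = (top::ennreal)" using dpos by (subst ennreal_divide_eq_top_iff) auto
        then have "g 0 z = top * ennreal (1 / fst z)" using gN[of 0] \<open>N 0 = top\<close> D
          by simp
        then show False using elim t by (simp add: ennreal_top_mult)
      qed
      have Ndec: "decseq N"
        unfolding N_def
        by (intro decseq_SucI nn_integral_mono mult_right_mono ennreal_leI power_mono fB_norm_mono) auto
      have "(INF m. N m) = (\<integral>\<^sup>+ w. (INF m. ennreal ((norm (kappa (-s) (fB m) w))\<^sup>2) * indicator (whitney_region (1,2) z) w) \<partial>lborel)"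
        unfolding N_def
      proof (rule nn_integral_monotone_convergence_INF_AE'[symmetric])
        show "\<And>i. AE x in lborel. ennreal ((norm (kappa (-s) (fB (Suc i)) x))\<^sup>2) * indicator (whitney_region (1, 2) z) x
             \<le> ennreal ((norm (kappa (-s) (fB i) x))\<^sup>2) * indicator (whitney_region (1, 2) z) x"
          by (intro AE_I2 mult_right_mono ennreal_leI power_mono fB_norm_mono) auto
        show "\<And>i. (\<lambda>x. ennreal ((norm (kappa (-s) (fB i) x))\<^sup>2) * indicator (whitney_region (1, 2) z) x) \<in> borel_measurable lborel"
          by measurable
        show "(\<integral>\<^sup>+ x. ennreal ((norm (kappa (-s) (fB 0) x))\<^sup>2) * indicator (whitney_region (1, 2) z) x \<partial>lborel) < \<infinity>"
          using \<open>N 0 \<noteq> top\<close> by (simp add: N_def top.not_eq_extremum)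
      qed
      also have "(\<lambda>w. (INF m. ennreal ((norm (kappa (-s) (fB m) w))\<^sup>2) * indicator (whitney_region (1,2) z) w)) = (\<lambda>w. 0)"
      proof (rule ext)
        fix w
        show "(INF m. ennreal ((norm (kappa (-s) (fB m) w))\<^sup>2) * indicator (whitney_region (1,2) z) w) = 0"
        proof (cases "w \<in> whitney_region (1,2) z")
          case True
          then have "fst w > 0" using t by (auto simp: whitney_region_def)
          then have "fB (Suc (to_nat (idx h w))) w = 0" by (rule fB_eventually0)
          then have "(INF m. ennreal ((norm (kappa (-s) (fB m) w))\<^sup>2) * indicator (whitney_region (1,2) z) w) \<le> 0"
            by (intro INF_lower2[of "Suc (to_nat (idx h w))"]) (auto simp: kappa_def)
          then show ?thesis by simp
        qed simp
      qed
      finally have "(INF m. N m) = 0" by simp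
      then have Nt: "N \<longlonglongrightarrow> 0" using LIMSEQ_INF[OF Ndec] by simp
      have "inverse D < top" using D dpos by (simp add: inverse_ennreal)
      then have "(\<lambda>m. inverse D * N m) \<longlonglongrightarrow> inverse D * 0"
        by (intro ennreal_tendsto_cmult Nt)
      then have "(\<lambda>m. N m / D) \<longlonglongrightarrow> 0" by (simp add: divide_ennreal_def mult.commute)
      then have "(\<lambda>m. epowr (N m / D) (p/2)) \<longlonglongrightarrow> 0"
        using p by (intro epowr_tendsto_0) auto
      then have "(\<lambda>m. ennreal (1 / fst z) * epowr (N m / D) (p/2)) \<longlonglongrightarrow> ennreal (1 / fst z) * 0"
        by (intro ennreal_tendsto_cmult) auto
      then have "(\<lambda>m. g m z) \<longlonglongrightarrow> 0" by (simp add: gN mult.commute)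
      moreover have "(\<lambda>m. g m z) \<longlonglongrightarrow> (INF m. g m z)" by (rule LIMSEQ_INF[OF gdec])
      ultimately show ?thesis using LIMSEQ_unique by blast
    qed
  qed
  have "(INF m. (\<integral>\<^sup>+ z. g m z \<partial>lborel)) = (\<integral>\<^sup>+ z. (INF m. g m z) \<partial>lborel)"
    by (rule nn_integral_monotone_convergence_INF_AE'[symmetric]) (use gmono g0 in auto)
  also have "\<dots> = (\<integral>\<^sup>+ z. 0 \<partial>lborel)" using nn_integral_cong_AE[OF INF0] by simp
  finally have I0: "(INF m. (\<integral>\<^sup>+ z. g m z \<partial>lborel)) = 0" by simp
  have "decseq (\<lambda>m. (\<integral>\<^sup>+ z. g m z \<partial>lborel))"
    by (intro decseq_SucI nn_integral_mono gmono)
  then have "(\<lambda>m. (\<integral>\<^sup>+ z. g m z \<partial>lborel)) \<longlonglongrightarrow> 0" using LIMSEQ_INF I0 by fastforce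
  then show ?thesis by (simp add: Zg)
qed

end


context cubes
begin

lemma exists_decomp:
  assumes Z: "Zint p s f < top" and wp: "whitney_param c" and hc: "h * real CARD('n) < fst c"
  shows "\<exists>lam a. atomic_decomp p s c f lam a \<and> lp_sum p lam \<le> ennreal (Kpc p h CARD('n)) * Zint p s f"
proof (intro exI conjI)
  show "lp_sum p lam \<le> ennreal (Kpc p h CARD('n)) * Zint p s f" by (rule lp_bound[OF Z])
  show "atomic_decomp p s c f lam ak"
    unfolding atomic_decomp_def
  proof (intro conjI allI)
    fix k show "Zp_atom p s c (ak k)" unfolding Zp_atom_def using ak_atom[OF Z wp hc] by blast
  next
    have "lp_sum p lam \<le> ennreal (Kpc p h CARD('n)) * Zint p s f" by (rule lp_bound[OF Z])
    also have "\<dots> < top" using Z by (simp add: ennreal_mult_less_top)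
    finally show "lp_sum p lam < \<infinity>" by simp
  next
    have "(\<lambda>m. epowr (Zint p s (fB m)) (1/p)) \<longlonglongrightarrow> 0"
      using p by (intro epowr_tendsto_0 fB_conv[OF Z]) auto
    then show "(\<lambda>m. zp_norm p s (\<lambda>w. f w - (\<Sum>k<m. lam k *s ak k w))) \<longlonglongrightarrow> 0"
      by (simp add: zp_norm_Zint Zint_diff_eq[OF Z])
  qed
qed

end

lemma le_cmult_INF:
  fixes x :: ennreal
  assumes C: "C > 0" and H: "\<And>i. i \<in> S \<Longrightarrow> x \<le> ennreal C * F i"
  shows "x \<le> ennreal C * (INF i\<in>S. F i)"
proof -
  have CC: "ennreal (1/C) * ennreal C = 1" using C by (simp add: ennreal_mult[symmetric])
  have "ennreal (1/C) * x \<le> (INF i\<in>S. F i)"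
  proof (rule INF_greatest)
    fix i assume "i \<in> S"
    then have "ennreal (1/C) * x \<le> ennreal (1/C) * (ennreal C * F i)" using H by (intro mult_left_mono) auto
    also have "\<dots> = (ennreal (1/C) * ennreal C) * F i" by (simp only: mult.assoc)
    also have "\<dots> = F i" by (simp only: CC mult_1)
    finally show "ennreal (1/C) * x \<le> F i" .
  qed
  then have "ennreal C * (ennreal (1/C) * x) \<le> ennreal C * (INF i\<in>S. F i)" by (rule mult_left_mono) simp
  moreover have "ennreal C * (ennreal (1/C) * x) = (ennreal (1/C) * ennreal C) * x" by (simp only: ac_simps)
  moreover have "(ennreal (1/C) * ennreal C) * x = x" by (simp only: CC mult_1)
  ultimately show ?thesis by simp
qed

lemma Katom_nonneg: "whitney_param c \<Longrightarrow> Katom p c n \<ge> 0"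
proof -
  assume wp: "whitney_param c"
  then have c: "fst c > 0" "snd c > 3/2" by (auto simp: whitney_param_def)
  have "1/(2 * snd c) \<le> 2 * snd c"
  proof -
    have "1/(2 * snd c) \<le> 1" using c by simp
    also have "1 \<le> 2 * snd c" using c by simp
    finally show ?thesis .
  qed
  then have a: "2 * snd c - 1/(2 * snd c) \<ge> 0" by simp
  have b: "unit_ball_vol (real n) \<ge> 0" by simp
  have d: "(fst c + 2 * snd c)^n \<ge> 0" using c by simp
  show ?thesis unfolding Katom_def using a b c d
    by (intro mult_nonneg_nonneg) simp_all
qed


theorem theorem2p25:
  fixes p s :: real and c :: "real \<times> real"
  assumes "0 < p" and "p \<le> 1" and "whitney_param c"
  shows "(\<forall>f :: real \<times> (real^'n::finite) \<Rightarrow> complex^'N::finite.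
            f \<in> borel_measurable lborel \<longrightarrow>
              (in_Zp p s f \<longleftrightarrow> (\<exists>lam a. atomic_decomp p s c f lam a)))
       \<and> (\<exists>C::real. C > 0 \<and>
            (\<forall>f :: real \<times> (real^'n) \<Rightarrow> complex^'N. in_Zp p s f \<longrightarrow>
               zp_norm p s f \<le> ennreal C * atomic_norm p s c f \<and>
               atomic_norm p s c f \<le> ennreal C * zp_norm p s f))"
proof -
  note p = assms(1,2) and wp = assms(3)
  define n where "n = CARD('n)"
  define h where "h = min 1 (fst c) / (real n + 1)"
  have c0: "fst c > 0" using wp by (simp add: whitney_param_def)
  have hpos: "h > 0" using c0 by (simp add: h_def)
  have hn: "h * real n < min 1 (fst c)"
  proof -
    have "h * real n = min 1 (fst c) * (real n / (real n + 1))" by (simp add: h_def)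
    also have "\<dots> < min 1 (fst c) * 1" using c0 by (intro mult_strict_left_mono) auto
    finally show ?thesis by simp
  qed
  have h1: "h * real CARD('n) < 1" and hc: "h * real CARD('n) < fst c" using hn by (auto simp: n_def)
  define K1 where "K1 = Katom p c CARD('n)"
  define K2 where "K2 = Kpc p h CARD('n)"
  have K1: "K1 \<ge> 0" unfolding K1_def by (rule Katom_nonneg[OF wp])
  have K2: "K2 > 0" unfolding K2_def by (rule Kpc_pos[OF hpos])
  have zp_le: "zp_norm p s f \<le> ennreal (K1 powr (1/p)) * lp_norm p lam"
    if fm: "f \<in> borel_measurable lborel" and dec: "atomic_decomp p s c f lam a"
    for f :: "real \<times> (real^'n) \<Rightarrow> complex^'N" and lam a
  proof -
    have "Zint p s f \<le> ennreal K1 * lp_sum p lam" unfolding K1_def by (rule partB[OF wp p fm dec])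
    then have "zp_norm p s f \<le> epowr (ennreal K1 * lp_sum p lam) (1/p)"
      unfolding zp_norm_Zint using p by (intro epowr_mono) auto
    also have "\<dots> = ennreal (K1 powr (1/p)) * lp_norm p lam"
      using p K1 by (simp add: epowr_mult epowr_ennreal lp_norm_def)
    finally show ?thesis .
  qed
  have at_le: "\<exists>lam a. atomic_decomp p s c f lam a \<and> lp_norm p lam \<le> ennreal (K2 powr (1/p)) * zp_norm p s f"
    if fm: "f \<in> borel_measurable lborel" and Z: "zp_norm p s f < top"
    for f :: "real \<times> (real^'n) \<Rightarrow> complex^'N"
  proof -
    have loc: "cubes f p h" by (intro cubes.intro fm p hpos h1)
    have Zf: "Zint p s f < top" using Z p by (simp add: zp_norm_Zint)
    obtain lam a where dec: "atomic_decomp p s c f lam a" and lb: "lp_sum p lam \<le> ennreal K2 * Zint p s f"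
      using cubes.exists_decomp[OF loc Zf wp hc] unfolding K2_def by blast
    have "lp_norm p lam \<le> epowr (ennreal K2 * Zint p s f) (1/p)"
      unfolding lp_norm_def using lb p by (intro epowr_mono) auto
    also have "\<dots> = ennreal (K2 powr (1/p)) * zp_norm p s f"
      using p K2 by (simp add: epowr_mult epowr_ennreal zp_norm_Zint)
    finally show ?thesis using dec by blast
  qed
  define C where "C = max (K1 powr (1/p)) (K2 powr (1/p)) + 1"
  have "K1 powr (1/p) \<ge> 0" by simp
  then have "max (K1 powr (1/p)) (K2 powr (1/p)) \<ge> 0" by (simp add: le_max_iff_disj)
  then have Cpos: "C > 0" unfolding C_def by linarith
  have C1: "ennreal (K1 powr (1/p)) \<le> ennreal C" by (intro ennreal_leI) (simp add: C_def)
  have C2: "ennreal (K2 powr (1/p)) \<le> ennreal C" by (intro ennreal_leI) (simp add: C_def)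
  show ?thesis
  proof (intro conjI allI impI exI[of _ C])
    fix f :: "real \<times> (real^'n) \<Rightarrow> complex^'N"
    assume fm: "f \<in> borel_measurable lborel"
    show "in_Zp p s f \<longleftrightarrow> (\<exists>lam a. atomic_decomp p s c f lam a)"
    proof
      assume "in_Zp p s f"
      then show "\<exists>lam a. atomic_decomp p s c f lam a" using at_le[OF fm] by (auto simp: in_Zp_def)
    next
      assume "\<exists>lam a. atomic_decomp p s c f lam a"
      then obtain lam a where dec: "atomic_decomp p s c f lam a" by blast
      have "lp_sum p lam < top" using dec by (simp add: atomic_decomp_def)
      then have "lp_norm p lam < top" by (simp add: lp_norm_def)
      then have "ennreal (K1 powr (1/p)) * lp_norm p lam < top" by (simp add: ennreal_mult_less_top)
      then have "zp_norm p s f < top" using zp_le[OF fm dec] by (rule le_less_trans[rotated])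
      then show "in_Zp p s f" using fm by (simp add: in_Zp_def)
    qed
  next
    show "C > 0" by (rule Cpos)
  next
    fix f :: "real \<times> (real^'n) \<Rightarrow> complex^'N"
    assume iz: "in_Zp p s f"
    then have fm: "f \<in> borel_measurable lborel" and Z: "zp_norm p s f < top" by (auto simp: in_Zp_def)
    show "zp_norm p s f \<le> ennreal C * atomic_norm p s c f"
      unfolding atomic_norm_def
    proof (rule le_cmult_INF[OF Cpos])
      fix lam assume "lam \<in> {lam. \<exists>a. atomic_decomp p s c f lam a}"
      then obtain a where dec: "atomic_decomp p s c f lam a" by blast
      have "zp_norm p s f \<le> ennreal (K1 powr (1/p)) * lp_norm p lam" by (rule zp_le[OF fm dec])
      also have "\<dots> \<le> ennreal C * lp_norm p lam" using C1 by (rule mult_right_mono) simp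
      finally show "zp_norm p s f \<le> ennreal C * lp_norm p lam" .
    qed
    obtain lam a where dec: "atomic_decomp p s c f lam a" and lb: "lp_norm p lam \<le> ennreal (K2 powr (1/p)) * zp_norm p s f"
      using at_le[OF fm Z] by blast
    have "atomic_norm p s c f \<le> lp_norm p lam"
      unfolding atomic_norm_def using dec by (intro INF_lower) auto
    also have "\<dots> \<le> ennreal (K2 powr (1/p)) * zp_norm p s f" by (rule lb)
    also have "\<dots> \<le> ennreal C * zp_norm p s f" using C2 by (rule mult_right_mono) simp
    finally show "atomic_norm p s c f \<le> ennreal C * zp_norm p s f" .
  qed
qed


end
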